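(* Let $f:\{0,1\}^n\times\{0,1\}^n\to\{0,1\}$ be a total function with $f(x,y)=g(x\wedge y)$ for some $g:\{0,1\}^n\to\{0,1\}$. Then for all $z\in\{0,1\}^n$: \[BQC(f)=\Omega\!\left(\frac{|z|}{1-\log|\hat{g}_z|}\right),\] with an absolute constant in $\Omega$.
   Context: $x\wedge y$ is the bitwise AND; $|z|$ is the Hamming weight of $z$; $\hat{g}_z=2^{-n}\sum_{a\in\{0,1\}^n}g(a)(-1)^{\sum_i a_iz_i}$; $\log$ is base 2. Quantum communication model (Yao, no prior entanglement): Alice receives $x$, Bob $y$; each holds private qubits initialized to the input and $|0\rangle$; in each round one player applies a unitary to his qubits and sends one qubit; at the end a qubit is measured giving the output; the cost is the number of qubits exchanged. $BQC(f)$ is the minimum cost of a quantum protocol computing $f$ with error probability at most $1/3$ on every input. *)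

theory Defs
  imports Complex_Main
begin

text \<open>Bit strings in {0,1}^n are modelled as functions nat => bool vanishing from index n on.
  Basis states of an m-qubit register are modelled the same way (bits of indices < m).\<close>

type_synonym cfg = "nat \<Rightarrow> bool"

definition cube :: "nat \<Rightarrow> cfg set" where
  "cube n = {a. \<forall>i\<ge>n. \<not> a i}"

definition band :: "cfg \<Rightarrow> cfg \<Rightarrow> cfg" where
  "band x y = (\<lambda>i. x i \<and> y i)"

definition hw :: "nat \<Rightarrow> cfg \<Rightarrow> nat" where
  "hw n z = card {i. i < n \<and> z i}"

definition fourier :: "nat \<Rightarrow> (cfg \<Rightarrow> bool) \<Rightarrow> cfg \<Rightarrow> real" where
  "fourier n g z = (1 / 2 ^ n) *
     (\<Sum>a\<in>cube n. (if g a then 1 else 0) * (-1) ^ card {i. i < n \<and> a i \<and> z i})"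

definition local_cfgs :: "nat set \<Rightarrow> cfg set" where
  "local_cfgs S = {a. \<forall>i. i \<notin> S \<longrightarrow> \<not> a i}"

definition restr :: "nat set \<Rightarrow> cfg \<Rightarrow> cfg" where
  "restr S s = (\<lambda>i. if i \<in> S then s i else False)"

text \<open>A matrix U (indexed by local configurations, U c a = <c|U|a>) is unitary on S.\<close>
definition unitary_on :: "nat set \<Rightarrow> (cfg \<Rightarrow> cfg \<Rightarrow> complex) \<Rightarrow> bool" where
  "unitary_on S U \<longleftrightarrow>
     (\<forall>a\<in>local_cfgs S. \<forall>b\<in>local_cfgs S.
        (\<Sum>c\<in>local_cfgs S. cnj (U c a) * U c b) = (if a = b then 1 else 0))"

definition apply_local :: "nat \<Rightarrow> nat set \<Rightarrow> (cfg \<Rightarrow> cfg \<Rightarrow> complex) \<Rightarrow> (cfg \<Rightarrow> complex) \<Rightarrow> (cfg \<Rightarrow> complex)" where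
  "apply_local m S U v = (\<lambda>s. \<Sum>t\<in>{t\<in>cube m. \<forall>i. i \<notin> S \<longrightarrow> t i = s i}.
        U (restr S s) (restr S t) * v t)"

text \<open>Ownership: own i = True means qubit i is held by Alice, False by Bob.
  A round (p, U, q): player p (True = Alice) applies unitary U on all qubits he holds,
  then sends his qubit q to the other player.\<close>

type_synonym round = "bool \<times> (cfg \<Rightarrow> cfg \<Rightarrow> complex) \<times> nat"

definition owned :: "nat \<Rightarrow> (nat \<Rightarrow> bool) \<Rightarrow> bool \<Rightarrow> nat set" where
  "owned m own p = {i. i < m \<and> own i = p}"

fun valid_rounds :: "nat \<Rightarrow> round list \<Rightarrow> (nat \<Rightarrow> bool) \<Rightarrow> bool" where
  "valid_rounds m [] own = True"
| "valid_rounds m ((p, U, q) # rs) own =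
     (q < m \<and> own q = p \<and> unitary_on (owned m own p) U \<and> valid_rounds m rs (own(q := \<not> p)))"

fun run :: "nat \<Rightarrow> round list \<Rightarrow> (nat \<Rightarrow> bool) \<Rightarrow> (cfg \<Rightarrow> complex) \<Rightarrow> (nat \<Rightarrow> bool) \<times> (cfg \<Rightarrow> complex)" where
  "run m [] own v = (own, v)"
| "run m ((p, U, q) # rs) own v = run m rs (own(q := \<not> p)) (apply_local m (owned m own p) U v)"

text \<open>A protocol: number of qubits m (>= 2n), initial ownership (Alice holds her n input qubits
  0..n-1, Bob holds his n input qubits n..2n-1, ancillas (initialised to 0) distributed arbitrarily),
  the communication rounds, and a final local unitary by the final player followed by the
  measurement of one of his qubits.\<close>

record protocol =
  nqubits :: nat
  owner0 :: "nat \<Rightarrow> bool"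
  rounds :: "round list"
  fin_player :: bool
  fin_unitary :: "cfg \<Rightarrow> cfg \<Rightarrow> complex"
  out_qubit :: nat

definition valid_protocol :: "nat \<Rightarrow> protocol \<Rightarrow> bool" where
  "valid_protocol n P \<longleftrightarrow>
     (let m = nqubits P; own' = fst (run m (rounds P) (owner0 P) (\<lambda>_. 0)) in
      2 * n \<le> m \<and>
      (\<forall>i<n. owner0 P i) \<and> (\<forall>i. n \<le> i \<and> i < 2 * n \<longrightarrow> \<not> owner0 P i) \<and>
      valid_rounds m (rounds P) (owner0 P) \<and>
      unitary_on (owned m own' (fin_player P)) (fin_unitary P) \<and>
      out_qubit P < m \<and> own' (out_qubit P) = fin_player P)"

definition init_basis :: "nat \<Rightarrow> cfg \<Rightarrow> cfg \<Rightarrow> cfg" where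
  "init_basis n x y = (\<lambda>i. if i < n then x i else if i < 2 * n then y (i - n) else False)"

definition final_state :: "nat \<Rightarrow> protocol \<Rightarrow> cfg \<Rightarrow> cfg \<Rightarrow> (cfg \<Rightarrow> complex)" where
  "final_state n P x y =
     (let m = nqubits P;
          (own', v) = run m (rounds P) (owner0 P) (\<lambda>s. if s = init_basis n x y then 1 else 0)
      in apply_local m (owned m own' (fin_player P)) (fin_unitary P) v)"

definition accept_prob :: "nat \<Rightarrow> protocol \<Rightarrow> cfg \<Rightarrow> cfg \<Rightarrow> real" where
  "accept_prob n P x y =
     (\<Sum>s\<in>{s\<in>cube (nqubits P). s (out_qubit P)}. (cmod (final_state n P x y s))\<^sup>2)"

definition computes :: "nat \<Rightarrow> (cfg \<Rightarrow> cfg \<Rightarrow> bool) \<Rightarrow> protocol \<Rightarrow> bool" where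
  "computes n f P \<longleftrightarrow>
     (\<forall>x\<in>cube n. \<forall>y\<in>cube n.
        (if f x y then accept_prob n P x y \<ge> 2/3 else accept_prob n P x y \<le> 1/3))"

definition BQC :: "nat \<Rightarrow> (cfg \<Rightarrow> cfg \<Rightarrow> bool) \<Rightarrow> nat" where
  "BQC n f = (LEAST c. \<exists>P. valid_protocol n P \<and> computes n f P \<and> length (rounds P) = c)"

end

theory Submission
  imports Defs
begin


abbreviation L :: "nat set \<Rightarrow> cfg set" where "L S \<equiv> local_cfgs S"

definition join :: "cfg \<Rightarrow> cfg \<Rightarrow> cfg" where "join c d = (\<lambda>i. c i \<or> d i)"

lemma L_mem: "a \<in> L S \<longleftrightarrow> (\<forall>i. a i \<longrightarrow> i \<in> S)"
  unfolding local_cfgs_def by auto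

lemma L_finite: assumes "finite S" shows "finite (L S)"
proof -
  have "L S \<subseteq> (\<lambda>A i. i \<in> A) ` Pow S"
  proof
    fix a assume "a \<in> L S"
    then have "{i. a i} \<in> Pow S" "a = (\<lambda>i. i \<in> {i. a i})" by (auto simp: L_mem)
    then show "a \<in> (\<lambda>A i. i \<in> A) ` Pow S" by blast
  qed
  then show ?thesis using assms finite_subset by blast
qed

lemma cube_L: "cube m = L {..<m}"
  unfolding cube_def local_cfgs_def by (auto simp: not_less)

lemma restr_L: "restr S s \<in> L S" unfolding restr_def L_mem by auto

lemma restr_id: "a \<in> L S \<Longrightarrow> restr S a = a"
  unfolding restr_def L_mem by auto

lemma join_L: "c \<in> L S \<Longrightarrow> d \<in> L T \<Longrightarrow> join c d \<in> L (S \<union> T)"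
  unfolding join_def L_mem by auto

lemma restr_join1: "S \<inter> T = {} \<Longrightarrow> c \<in> L S \<Longrightarrow> d \<in> L T \<Longrightarrow> restr S (join c d) = c"
  unfolding join_def restr_def L_mem by (rule ext) auto

lemma restr_join2: "S \<inter> T = {} \<Longrightarrow> c \<in> L S \<Longrightarrow> d \<in> L T \<Longrightarrow> restr T (join c d) = d"
  unfolding join_def restr_def L_mem by (rule ext) auto

lemma join_restr: "a \<in> L (S \<union> T) \<Longrightarrow> join (restr S a) (restr T a) = a"
  unfolding join_def restr_def L_mem by (rule ext) auto

lemma sum_split_L:
  assumes "S \<inter> T = {}" "finite S" "finite T"
  shows "(\<Sum>a\<in>L (S \<union> T). h a) = (\<Sum>c\<in>L S. \<Sum>d\<in>L T. h (join c d))"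
proof -
  have bij: "bij_betw (\<lambda>(c,d). join c d) (L S \<times> L T) (L (S \<union> T))"
  proof (rule bij_betw_byWitness[where f' = "\<lambda>a. (restr S a, restr T a)"])
    show "\<forall>a\<in>L S \<times> L T. (restr S (case a of (c, d) \<Rightarrow> join c d), restr T (case a of (c, d) \<Rightarrow> join c d)) = a"
      using assms by (auto simp: restr_join1 restr_join2)
    show "\<forall>a'\<in>L (S \<union> T). (case (restr S a', restr T a') of (c, d) \<Rightarrow> join c d) = a'"
      by (auto simp: join_restr)
    show "(\<lambda>(c, d). join c d) ` (L S \<times> L T) \<subseteq> L (S \<union> T)" by (auto simp: join_L)
    show "(\<lambda>a. (restr S a, restr T a)) ` L (S \<union> T) \<subseteq> L S \<times> L T" by (auto simp: restr_L)
  qed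
  have "(\<Sum>a\<in>L (S \<union> T). h a) = (\<Sum>p\<in>L S \<times> L T. h (case p of (c,d) \<Rightarrow> join c d))"
    using sum.reindex_bij_betw[OF bij, of h] by simp
  also have "\<dots> = (\<Sum>c\<in>L S. \<Sum>d\<in>L T. h (join c d))"
    by (simp add: sum.cartesian_product L_finite assms prod.case_distrib)
  finally show ?thesis .
qed

lemma sum_cube_split:
  assumes "S \<inter> T = {}" "S \<union> T = {..<m}"
  shows "(\<Sum>s\<in>cube m. h s) = (\<Sum>c\<in>L S. \<Sum>d\<in>L T. h (join c d))"
proof -
  have "finite S" "finite T" using assms(2) by (metis finite_Un finite_lessThan)+
  then show ?thesis using sum_split_L[OF assms(1)] assms(2) by (simp add: cube_L)
qed

lemma apply_local_eq:
  assumes "S \<subseteq> {..<m}" "s \<in> cube m"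
  shows "apply_local m S U v s = (\<Sum>c\<in>L S. U (restr S s) c * v (\<lambda>i. if i \<in> S then c i else s i))"
proof -
  let ?f = "\<lambda>c. (\<lambda>i. if i \<in> S then c i else s i)"
  let ?A = "{t\<in>cube m. \<forall>i. i \<notin> S \<longrightarrow> t i = s i}"
  have bij: "bij_betw ?f (L S) ?A"
  proof (rule bij_betw_byWitness[where f' = "restr S"])
    show "\<forall>a\<in>L S. restr S (?f a) = a" by (auto simp: restr_def L_mem)
    show "\<forall>a'\<in>?A. ?f (restr S a') = a'" by (auto simp: restr_def)
    show "?f ` L S \<subseteq> ?A" using assms by (auto simp: L_mem cube_def)
    show "restr S ` ?A \<subseteq> L S" by (auto simp: restr_L)
  qed
  have "apply_local m S U v s = (\<Sum>t\<in>?A. U (restr S s) (restr S t) * v t)"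
    unfolding apply_local_def by simp
  also have "\<dots> = (\<Sum>c\<in>L S. U (restr S s) (restr S (?f c)) * v (?f c))"
    using sum.reindex_bij_betw[OF bij, of "\<lambda>t. U (restr S s) (restr S t) * v t"] by simp
  also have "\<dots> = (\<Sum>c\<in>L S. U (restr S s) c * v (?f c))"
  proof (rule sum.cong)
    fix c assume "c \<in> L S"
    then have "restr S (?f c) = c" by (auto simp: restr_def L_mem fun_eq_iff)
    then show "U (restr S s) (restr S (?f c)) * v (?f c) = U (restr S s) c * v (?f c)" by simp
  qed simp
  finally show ?thesis .
qed

lemma L_insert_sum:
  assumes "j \<notin> Z" "finite Z"
  shows "(\<Sum>u\<in>L (insert j Z). h u) = (\<Sum>u\<in>L Z. h u + h (u(j:=True)))"
proof -
  have split: "L (insert j Z) = L Z \<union> (\<lambda>u. u(j:=True)) ` L Z"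
  proof
    show "L (insert j Z) \<subseteq> L Z \<union> (\<lambda>u. u(j:=True)) ` L Z"
    proof
      fix a assume a: "a \<in> L (insert j Z)"
      show "a \<in> L Z \<union> (\<lambda>u. u(j:=True)) ` L Z"
      proof (cases "a j")
        case True
        then have "a = (a(j:=False))(j:=True)" "a(j:=False) \<in> L Z" using a by (auto simp: L_mem fun_upd_idem)
        then show ?thesis by blast
      next
        case False then show ?thesis using a by (auto simp: L_mem)
      qed
    qed
    show "L Z \<union> (\<lambda>u. u(j:=True)) ` L Z \<subseteq> L (insert j Z)" by (auto simp: L_mem)
  qed
  have disj: "L Z \<inter> (\<lambda>u. u(j:=True)) ` L Z = {}" using assms(1) by (auto simp: L_mem)
  have inj: "inj_on (\<lambda>u. u(j:=True)) (L Z)"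
  proof (rule inj_onI)
    fix x y assume "x \<in> L Z" "y \<in> L Z" "x(j:=True) = y(j:=True)"
    then show "x = y" using assms(1) unfolding L_mem fun_eq_iff by (metis fun_upd_other)
  qed
  have "(\<Sum>u\<in>L (insert j Z). h u) = (\<Sum>u\<in>L Z. h u) + (\<Sum>u\<in>(\<lambda>u. u(j:=True)) ` L Z. h u)"
    unfolding split by (rule sum.union_disjoint) (auto simp: L_finite assms disj)
  also have "(\<Sum>u\<in>(\<lambda>u. u(j:=True)) ` L Z. h u) = (\<Sum>u\<in>L Z. h (u(j:=True)))"
    by (simp add: sum.reindex[OF inj])
  finally show ?thesis by (simp add: sum.distrib)
qed

lemma L_empty: "L {} = {\<lambda>_. False}" unfolding local_cfgs_def by auto


definition nrm :: "nat set \<Rightarrow> (cfg \<Rightarrow> complex) \<Rightarrow> real" where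
  "nrm S F = (\<Sum>c\<in>L S. (cmod (F c))\<^sup>2)"

definition UF :: "nat set \<Rightarrow> (cfg \<Rightarrow> cfg \<Rightarrow> complex) \<Rightarrow> (cfg \<Rightarrow> complex) \<Rightarrow> (cfg \<Rightarrow> complex)" where
  "UF S U F = (\<lambda>c. \<Sum>c'\<in>L S. U c c' * F c')"

lemma nrm_nonneg: "0 \<le> nrm S F" unfolding nrm_def by (simp add: sum_nonneg)

lemma of_real_nrm: "complex_of_real (nrm S F) = (\<Sum>c\<in>L S. cnj (F c) * F c)"
  unfolding nrm_def of_real_sum
  by (rule sum.cong[OF refl]) (subst complex_norm_square, simp add: mult.commute)

lemma unitary_nrm:
  assumes fin: "finite S" and U: "unitary_on S U"
  shows "nrm S (UF S U F) = nrm S F"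
proof -
  have "complex_of_real (nrm S (UF S U F)) =
      (\<Sum>c\<in>L S. (\<Sum>a\<in>L S. cnj (U c a) * cnj (F a)) * (\<Sum>b\<in>L S. U c b * F b))"
    by (simp only: of_real_nrm UF_def cnj_sum complex_cnj_mult)
  also have "\<dots> = (\<Sum>c\<in>L S. \<Sum>a\<in>L S. \<Sum>b\<in>L S. (cnj (F a) * F b) * (cnj (U c a) * U c b))"
    by (simp only: sum_product) (intro sum.cong refl; simp only: ac_simps)
  also have "\<dots> = (\<Sum>a\<in>L S. \<Sum>c\<in>L S. \<Sum>b\<in>L S. (cnj (F a) * F b) * (cnj (U c a) * U c b))"
    by (rule sum.swap)
  also have "\<dots> = (\<Sum>a\<in>L S. \<Sum>b\<in>L S. \<Sum>c\<in>L S. (cnj (F a) * F b) * (cnj (U c a) * U c b))"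
    by (rule sum.cong[OF refl], rule sum.swap)
  also have "\<dots> = (\<Sum>a\<in>L S. \<Sum>b\<in>L S. (cnj (F a) * F b) * (\<Sum>c\<in>L S. cnj (U c a) * U c b))"
    by (simp only: sum_distrib_left)
  also have "\<dots> = (\<Sum>a\<in>L S. \<Sum>b\<in>L S. (if b = a then cnj (F a) * F b else 0))"
  proof (intro sum.cong refl)
    fix a b assume "a \<in> L S" "b \<in> L S"
    then have "(\<Sum>c\<in>L S. cnj (U c a) * U c b) = (if a = b then 1 else 0)"
      using U unfolding unitary_on_def by blast
    then show "(cnj (F a) * F b) * (\<Sum>c\<in>L S. cnj (U c a) * U c b) = (if b = a then cnj (F a) * F b else 0)"
      by auto
  qed
  also have "\<dots> = (\<Sum>a\<in>L S. cnj (F a) * F a)"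
    by (intro sum.cong refl) (simp only: sum.delta[OF L_finite[OF fin]], simp)
  also have "\<dots> = complex_of_real (nrm S F)" by (simp only: of_real_nrm)
  finally show ?thesis using of_real_eq_iff by blast
qed

lemma apply_step:
  assumes ST: "S \<inter> T = {}" "S \<union> T = {..<m}" and s: "s \<in> cube m"
    and v: "\<forall>s\<in>cube m. v s = (\<Sum>w<N. F w (restr S s) * G w (restr T s))"
  shows "apply_local m S U v s = (\<Sum>w<N. UF S U (F w) (restr S s) * G w (restr T s))"
proof -
  have Sm: "S \<subseteq> {..<m}" using ST by auto
  let ?mix = "\<lambda>c. (\<lambda>i. if i \<in> S then c i else s i)"
  have mixc: "?mix c \<in> cube m" if "c \<in> L S" for c
    using that s Sm unfolding cube_def L_mem by auto
  have r1: "restr S (?mix c) = c" if "c \<in> L S" for c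
    using that unfolding restr_def L_mem fun_eq_iff by auto
  have r2: "restr T (?mix c) = restr T s" for c
    using ST unfolding restr_def fun_eq_iff by auto
  have "apply_local m S U v s = (\<Sum>c\<in>L S. U (restr S s) c * v (?mix c))"
    by (rule apply_local_eq[OF Sm s])
  also have "\<dots> = (\<Sum>c\<in>L S. U (restr S s) c * (\<Sum>w<N. F w c * G w (restr T s)))"
    by (intro sum.cong refl) (simp add: v mixc r1 r2)
  also have "\<dots> = (\<Sum>c\<in>L S. \<Sum>w<N. (U (restr S s) c * F w c) * G w (restr T s))"
    by (simp only: sum_distrib_left mult.assoc)
  also have "\<dots> = (\<Sum>w<N. \<Sum>c\<in>L S. (U (restr S s) c * F w c) * G w (restr T s))"
    by (rule sum.swap)
  also have "\<dots> = (\<Sum>w<N. UF S U (F w) (restr S s) * G w (restr T s))"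
    unfolding UF_def by (simp only: sum_distrib_right)
  finally show ?thesis .
qed

definition newM :: "nat \<Rightarrow> nat \<Rightarrow> (nat \<Rightarrow> cfg \<Rightarrow> complex) \<Rightarrow> nat \<Rightarrow> cfg \<Rightarrow> complex" where
  "newM q N A w c = (if w < N then A w (c(q:=False)) else A (w - N) (c(q:=True)))"

definition newO :: "nat set \<Rightarrow> nat \<Rightarrow> nat \<Rightarrow> (nat \<Rightarrow> cfg \<Rightarrow> complex) \<Rightarrow> nat \<Rightarrow> cfg \<Rightarrow> complex" where
  "newO T q N G w d = (if w < N then (if d q then 0 else G w (restr T d))
                       else (if d q then G (w - N) (restr T d) else 0))"

lemma sum_double: "(\<Sum>w<2*(N::nat). h w) = (\<Sum>w<N. h w) + (\<Sum>w<N. h (w + N))"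
proof -
  have "(\<Sum>w<2*N. h w) = (\<Sum>w\<in>{0..<N}. h w) + (\<Sum>w\<in>{N..<N+N}. h w)"
    using sum.atLeastLessThan_concat[of 0 N "N+N" h] by (simp add: mult_2 atLeast0LessThan[symmetric])
  moreover have "(\<Sum>w\<in>{N..<N+N}. h w) = (\<Sum>w\<in>{0..<N}. h (w + N))"
    by (metis sum.shift_bounds_nat_ivl add_0)
  ultimately show ?thesis by (simp add: atLeast0LessThan)
qed

lemma split_step:
  assumes ST: "S \<inter> T = {}" and q: "q \<in> S"
  shows "(\<Sum>w<N. A w (restr S s) * G w (restr T s)) =
    (\<Sum>w<2*N. newM q N A w (restr (S - {q}) s) * newO T q N G w (restr (insert q T) s))"
proof -
  have e1: "restr T (restr (insert q T) s) = restr T s" unfolding restr_def by auto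
  have e2: "restr (insert q T) s q = s q" unfolding restr_def by auto
  have e3: "(restr (S - {q}) s)(q := s q) = restr S s" using q unfolding restr_def fun_eq_iff by auto
  show ?thesis
  proof (cases "s q")
    case True
    then have "(restr (S - {q}) s)(q := True) = restr S s" using e3 by simp
    then show ?thesis unfolding sum_double newM_def newO_def using True e1 e2 by simp
  next
    case False
    then have "(restr (S - {q}) s)(q := False) = restr S s" using e3 by simp
    then show ?thesis unfolding sum_double newM_def newO_def using False e1 e2 by simp
  qed
qed

lemma nrm_insert:
  assumes "q \<notin> S" "finite S"
  shows "nrm (insert q S) A = (\<Sum>c\<in>L S. (cmod (A c))\<^sup>2 + (cmod (A (c(q:=True))))\<^sup>2)"
  unfolding nrm_def by (rule L_insert_sum[OF assms])

lemma L_upd_False: "c \<in> L S \<Longrightarrow> q \<notin> S \<Longrightarrow> c(q:=False) = c"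
  unfolding L_mem fun_eq_iff by auto

lemma newM_nrm:
  assumes q: "q \<in> S" and fin: "finite S" and A: "\<forall>w<N. nrm S (A w) \<le> 1" and w: "w < 2*N"
  shows "nrm (S - {q}) (newM q N A w) \<le> 1"
proof -
  have S: "S = insert q (S - {q})" using q by auto
  have fin': "finite (S - {q})" using fin by simp
  have key: "nrm S B = (\<Sum>c\<in>L (S-{q}). (cmod (B c))\<^sup>2 + (cmod (B (c(q:=True))))\<^sup>2)" for B
    using nrm_insert[of q "S - {q}" B] fin' S by simp
  show ?thesis
  proof (cases "w < N")
    case True
    have "nrm (S - {q}) (newM q N A w) = (\<Sum>c\<in>L (S-{q}). (cmod (A w c))\<^sup>2)"
      unfolding nrm_def newM_def using True by (intro sum.cong refl) (simp add: L_upd_False)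
    also have "\<dots> \<le> nrm S (A w)" unfolding key by (intro sum_mono) simp
    finally show ?thesis using A True by force
  next
    case False
    have "nrm (S - {q}) (newM q N A w) = (\<Sum>c\<in>L (S-{q}). (cmod (A (w - N) (c(q:=True))))\<^sup>2)"
      unfolding nrm_def newM_def using False by simp
    also have "\<dots> \<le> nrm S (A (w - N))" unfolding key by (intro sum_mono) simp
    also have "\<dots> \<le> 1" using A False w by (metis add_diff_inverse_nat diff_less_mono2 mult_2 nat_add_left_cancel_less not_less_eq order.refl less_diff_conv2 add_diff_cancel_left' leI less_imp_diff_less)
    finally show ?thesis .
  qed
qed

lemma newO_nrm:
  assumes q: "q \<notin> T" and fin: "finite T" and G: "\<forall>w<N. nrm T (G w) \<le> 1" and w: "w < 2*N"
  shows "nrm (insert q T) (newO T q N G w) \<le> 1"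
proof -
  have rr: "restr T (c(q:=True)) = c" if "c \<in> L T" for c
    using that q unfolding restr_def L_mem fun_eq_iff by auto
  have cq: "c q = False" if "c \<in> L T" for c using that q unfolding L_mem by auto
  have "nrm (insert q T) (newO T q N G w) =
     (\<Sum>c\<in>L T. (cmod (newO T q N G w c))\<^sup>2 + (cmod (newO T q N G w (c(q:=True))))\<^sup>2)"
    by (rule nrm_insert[OF q fin])
  also have "\<dots> = (if w < N then nrm T (G w) else nrm T (G (w - N)))"
  proof (cases "w < N")
    case True
    then show ?thesis unfolding nrm_def newO_def
      by (simp, intro sum.cong refl) (simp add: cq rr restr_id)
  next
    case False
    then show ?thesis unfolding nrm_def newO_def
      by (simp, intro sum.cong refl) (simp add: cq rr restr_id)
  qed
  finally show ?thesis using G w by auto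
qed

definition DEC :: "nat \<Rightarrow> (nat \<Rightarrow> bool) \<Rightarrow> nat \<Rightarrow> (cfg \<Rightarrow> cfg \<Rightarrow> cfg \<Rightarrow> complex)
   \<Rightarrow> (cfg \<Rightarrow> nat \<Rightarrow> cfg \<Rightarrow> complex) \<Rightarrow> (cfg \<Rightarrow> nat \<Rightarrow> cfg \<Rightarrow> complex) \<Rightarrow> bool" where
  "DEC m own N V F G \<longleftrightarrow>
     (\<forall>x y. \<forall>s\<in>cube m. V x y s = (\<Sum>w<N. F x w (restr (owned m own True) s) * G y w (restr (owned m own False) s)))
   \<and> (\<forall>x w. w < N \<longrightarrow> nrm (owned m own True) (F x w) \<le> 1)
   \<and> (\<forall>y w. w < N \<longrightarrow> nrm (owned m own False) (G y w) \<le> 1)"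

lemma owned_disj: "owned m own True \<inter> owned m own False = {}"
  unfolding owned_def by auto
lemma owned_disj': "owned m own False \<inter> owned m own True = {}"
  unfolding owned_def by auto
lemma owned_union: "owned m own True \<union> owned m own False = {..<m}"
  unfolding owned_def by auto
lemma owned_union': "owned m own False \<union> owned m own True = {..<m}"
  unfolding owned_def by auto
lemma owned_finite: "finite (owned m own p)"
  unfolding owned_def by auto

lemma owned_upd1: "q < m \<Longrightarrow> own q = p \<Longrightarrow> owned m (own(q := \<not> p)) p = owned m own p - {q}"
  unfolding owned_def by auto
lemma owned_upd2: "q < m \<Longrightarrow> own q = p \<Longrightarrow> owned m (own(q := \<not> p)) (\<not> p) = insert q (owned m own (\<not> p))"
  unfolding owned_def by auto

lemma round_step:
  assumes q: "q < m" "own q = p" and U: "unitary_on (owned m own p) U"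
    and D: "DEC m own N V F G"
  shows "\<exists>F' G'. DEC m (own(q := \<not> p)) (2*N) (\<lambda>x y. apply_local m (owned m own p) U (V x y)) F' G'"
proof (cases p)
  case True
  let ?A = "owned m own True" and ?B = "owned m own False"
  have qA: "q \<in> ?A" using q True unfolding owned_def by auto
  have qB: "q \<notin> ?B" using q True unfolding owned_def by auto
  have A': "owned m (own(q := False)) True = ?A - {q}" using owned_upd1[of q m own p, OF q] True by simp
  have B': "owned m (own(q := False)) False = insert q ?B" using owned_upd2[of q m own p, OF q] True by simp
  define F' where "F' x = newM q N (\<lambda>w. UF ?A U (F x w))" for x
  define G' where "G' y = newO ?B q N (G y)" for y
  have eq: "\<forall>x y. \<forall>s\<in>cube m. apply_local m ?A U (V x y) s =
    (\<Sum>w<2*N. F' x w (restr (?A - {q}) s) * G' y w (restr (insert q ?B) s))"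
  proof (intro allI ballI)
    fix x y s assume s: "s \<in> cube m"
    have "apply_local m ?A U (V x y) s = (\<Sum>w<N. UF ?A U (F x w) (restr ?A s) * G y w (restr ?B s))"
      using D s unfolding DEC_def by (intro apply_step[OF owned_disj owned_union]) auto
    also have "\<dots> = (\<Sum>w<2*N. F' x w (restr (?A - {q}) s) * G' y w (restr (insert q ?B) s))"
      unfolding F'_def G'_def by (rule split_step[OF owned_disj qA])
    finally show "apply_local m ?A U (V x y) s =
      (\<Sum>w<2*N. F' x w (restr (?A - {q}) s) * G' y w (restr (insert q ?B) s))" .
  qed
  have n1: "\<forall>x w. w < 2*N \<longrightarrow> nrm (?A - {q}) (F' x w) \<le> 1"
  proof (intro allI impI)
    fix x w assume "w < 2*N"
    moreover have "\<forall>w<N. nrm ?A (UF ?A U (F x w)) \<le> 1"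
      using D U True unfolding DEC_def by (simp add: unitary_nrm owned_finite)
    ultimately show "nrm (?A - {q}) (F' x w) \<le> 1"
      unfolding F'_def by (intro newM_nrm[OF qA owned_finite]) auto
  qed
  have n2: "\<forall>y w. w < 2*N \<longrightarrow> nrm (insert q ?B) (G' y w) \<le> 1"
  proof (intro allI impI)
    fix y w assume "w < 2*N"
    then show "nrm (insert q ?B) (G' y w) \<le> 1"
      unfolding G'_def using D unfolding DEC_def by (intro newO_nrm[OF qB owned_finite]) auto
  qed
  show ?thesis unfolding DEC_def using eq n1 n2 A' B' True by auto
next
  case False
  let ?A = "owned m own True" and ?B = "owned m own False"
  have qB: "q \<in> ?B" using q False unfolding owned_def by auto
  have qA: "q \<notin> ?A" using q False unfolding owned_def by auto
  have B': "owned m (own(q := True)) False = ?B - {q}" using owned_upd1[of q m own p, OF q] False by simp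
  have A': "owned m (own(q := True)) True = insert q ?A" using owned_upd2[of q m own p, OF q] False by simp
  define G' where "G' y = newM q N (\<lambda>w. UF ?B U (G y w))" for y
  define F' where "F' x = newO ?A q N (F x)" for x
  have eq: "\<forall>x y. \<forall>s\<in>cube m. apply_local m ?B U (V x y) s =
    (\<Sum>w<2*N. F' x w (restr (insert q ?A) s) * G' y w (restr (?B - {q}) s))"
  proof (intro allI ballI)
    fix x y s assume s: "s \<in> cube m"
    have "apply_local m ?B U (V x y) s = (\<Sum>w<N. UF ?B U (G y w) (restr ?B s) * F x w (restr ?A s))"
      using D s unfolding DEC_def by (intro apply_step[OF owned_disj' owned_union']) (auto simp: mult.commute)
    also have "\<dots> = (\<Sum>w<2*N. G' y w (restr (?B - {q}) s) * F' x w (restr (insert q ?A) s))"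
      unfolding F'_def G'_def by (rule split_step[OF owned_disj' qB])
    finally show "apply_local m ?B U (V x y) s =
      (\<Sum>w<2*N. F' x w (restr (insert q ?A) s) * G' y w (restr (?B - {q}) s))"
      by (simp add: mult.commute)
  qed
  have n1: "\<forall>y w. w < 2*N \<longrightarrow> nrm (?B - {q}) (G' y w) \<le> 1"
  proof (intro allI impI)
    fix y w assume "w < 2*N"
    moreover have "\<forall>w<N. nrm ?B (UF ?B U (G y w)) \<le> 1"
      using D U False unfolding DEC_def by (simp add: unitary_nrm owned_finite)
    ultimately show "nrm (?B - {q}) (G' y w) \<le> 1"
      unfolding G'_def by (intro newM_nrm[OF qB owned_finite]) auto
  qed
  have n2: "\<forall>x w. w < 2*N \<longrightarrow> nrm (insert q ?A) (F' x w) \<le> 1"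
  proof (intro allI impI)
    fix x w assume "w < 2*N"
    then show "nrm (insert q ?A) (F' x w) \<le> 1"
      unfolding F'_def using D unfolding DEC_def by (intro newO_nrm[OF qA owned_finite]) auto
  qed
  show ?thesis unfolding DEC_def using eq n1 n2 A' B' False by auto
qed

lemma run_fst: "fst (run m rs own v) = fst (run m rs own v')"
  by (induction rs arbitrary: own v v') auto

lemma run_dec:
  assumes "valid_rounds m rs own" "DEC m own N V F G"
  shows "\<exists>F' G'. DEC m (fst (run m rs own (\<lambda>_. 0))) (2 ^ length rs * N)
     (\<lambda>x y. snd (run m rs own (V x y))) F' G'"
  using assms
proof (induction rs arbitrary: own N V F G)
  case Nil
  then show ?case by auto
next
  case (Cons r rs)
  obtain p U q where r: "r = (p, U, q)" by (cases r) auto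
  have v: "q < m" "own q = p" "unitary_on (owned m own p) U" "valid_rounds m rs (own(q := \<not> p))"
    using Cons.prems(1) r by auto
  obtain F' G' where D': "DEC m (own(q := \<not> p)) (2*N) (\<lambda>x y. apply_local m (owned m own p) U (V x y)) F' G'"
    using round_step[OF v(1,2,3) Cons.prems(2)] by blast
  obtain F'' G'' where D'': "DEC m (fst (run m rs (own(q := \<not> p)) (\<lambda>_. 0))) (2 ^ length rs * (2*N))
     (\<lambda>x y. snd (run m rs (own(q := \<not> p)) (apply_local m (owned m own p) U (V x y)))) F'' G''"
    using Cons.IH[OF v(4) D'] by blast
  have "fst (run m (r # rs) own (\<lambda>_. 0)) = fst (run m rs (own(q := \<not> p)) (\<lambda>_. 0))"
    using r run_fst by simp
  then show ?case using D'' r by (auto simp: mult_ac)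
qed


lemma owned_disjp: "owned m own p \<inter> owned m own (\<not> p) = {}"
  unfolding owned_def by auto
lemma owned_unionp: "owned m own p \<union> owned m own (\<not> p) = {..<m}"
  unfolding owned_def by auto

lemma nrm_delta: "finite S \<Longrightarrow> nrm S (\<lambda>c. if c = r then 1 else 0) = (if r \<in> L S then 1 else 0)"
  unfolding nrm_def by (simp add: if_distrib[of "\<lambda>z. (cmod z)\<^sup>2"] sum.delta' L_finite cong: if_cong)

lemma init_cube: "2 * n \<le> m \<Longrightarrow> init_basis n x y \<in> cube m"
  unfolding init_basis_def cube_def by auto

lemma eq_by_restr:
  assumes "S \<inter> T = {}" "S \<union> T = {..<m}" "s \<in> cube m" "t \<in> cube m"
  shows "s = t \<longleftrightarrow> restr S s = restr S t \<and> restr T s = restr T t"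
proof
  assume "restr S s = restr S t \<and> restr T s = restr T t"
  moreover have "join (restr S s) (restr T s) = s" "join (restr S t) (restr T t) = t"
    using assms join_restr by (auto simp: cube_L)
  ultimately show "s = t" by metis
qed simp

definition F0 :: "nat \<Rightarrow> nat \<Rightarrow> (nat \<Rightarrow> bool) \<Rightarrow> cfg \<Rightarrow> nat \<Rightarrow> cfg \<Rightarrow> complex" where
  "F0 n m own x w c = (if c = restr (owned m own True) (init_basis n x (\<lambda>_. False)) then 1 else 0)"
definition G0 :: "nat \<Rightarrow> nat \<Rightarrow> (nat \<Rightarrow> bool) \<Rightarrow> cfg \<Rightarrow> nat \<Rightarrow> cfg \<Rightarrow> complex" where
  "G0 n m own y w d = (if d = restr (owned m own False) (init_basis n (\<lambda>_. False) y) then 1 else 0)"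

lemma init_dec:
  assumes m: "2 * n \<le> m" and o1: "\<forall>i<n. own i" and o2: "\<forall>i. n \<le> i \<and> i < 2 * n \<longrightarrow> \<not> own i"
  shows "DEC m own 1 (\<lambda>x y s. if s = init_basis n x y then 1 else 0) (F0 n m own) (G0 n m own)"
proof -
  let ?A = "owned m own True" and ?B = "owned m own False"
  have rA: "restr ?A (init_basis n x y) = restr ?A (init_basis n x (\<lambda>_. False))" for x y
    using o2 unfolding restr_def init_basis_def owned_def fun_eq_iff by auto
  have rB: "restr ?B (init_basis n x y) = restr ?B (init_basis n (\<lambda>_. False) y)" for x y
    using o1 unfolding restr_def init_basis_def owned_def fun_eq_iff by auto
  have eq: "(if s = init_basis n x y then 1 else 0) = F0 n m own x 0 (restr ?A s) * G0 n m own y 0 (restr ?B s)"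
    if s: "s \<in> cube m" for x y s
  proof -
    have "s = init_basis n x y \<longleftrightarrow> restr ?A s = restr ?A (init_basis n x y) \<and> restr ?B s = restr ?B (init_basis n x y)"
      by (rule eq_by_restr[OF owned_disj owned_union s init_cube[OF m]])
    also have "\<dots> \<longleftrightarrow> restr ?A s = restr ?A (init_basis n x (\<lambda>_. False)) \<and> restr ?B s = restr ?B (init_basis n (\<lambda>_. False) y)"
      using rA[of x y] rB[of x y] by metis
    finally show ?thesis unfolding F0_def G0_def by simp
  qed
  have n1: "nrm ?A (F0 n m own x w) \<le> 1" for x w
    unfolding F0_def by (subst nrm_delta) (auto simp: owned_finite)
  have n2: "nrm ?B (G0 n m own y w) \<le> 1" for y w
    unfolding G0_def by (subst nrm_delta) (auto simp: owned_finite)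
  show ?thesis unfolding DEC_def
    using eq n1 n2 by simp
qed

definition tot :: "nat \<Rightarrow> (cfg \<Rightarrow> complex) \<Rightarrow> real" where
  "tot m v = (\<Sum>s\<in>cube m. (cmod (v s))\<^sup>2)"

lemma AL_join:
  assumes ST: "S \<inter> T = {}" "S \<union> T = {..<m}" and c: "c \<in> L S" and d: "d \<in> L T"
  shows "apply_local m S U v (join c d) = UF S U (\<lambda>c'. v (join c' d)) c"
proof -
  have Sm: "S \<subseteq> {..<m}" using ST by auto
  have jc: "join c d \<in> cube m" using join_L[OF c d] ST by (simp add: cube_L)
  have "apply_local m S U v (join c d) = (\<Sum>c'\<in>L S. U (restr S (join c d)) c' * v (\<lambda>i. if i \<in> S then c' i else join c d i))"
    by (rule apply_local_eq[OF Sm jc])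
  also have "\<dots> = (\<Sum>c'\<in>L S. U c c' * v (join c' d))"
  proof (rule sum.cong[OF refl])
    fix c' assume c': "c' \<in> L S"
    have "(\<lambda>i. if i \<in> S then c' i else join c d i) = join c' d"
      using c c' d ST unfolding join_def L_mem fun_eq_iff by auto
    then show "U (restr S (join c d)) c' * v (\<lambda>i. if i \<in> S then c' i else join c d i) = U c c' * v (join c' d)"
      using restr_join1[OF ST(1) c d] by simp
  qed
  finally show ?thesis unfolding UF_def .
qed

lemma apply_local_tot:
  assumes ST: "S \<inter> T = {}" "S \<union> T = {..<m}" and U: "unitary_on S U"
  shows "tot m (apply_local m S U v) = tot m v"
proof -
  have fS: "finite S" using ST by (metis finite_Un finite_lessThan)
  have "tot m (apply_local m S U v) = (\<Sum>c\<in>L S. \<Sum>d\<in>L T. (cmod (apply_local m S U v (join c d)))\<^sup>2)"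
    unfolding tot_def by (rule sum_cube_split[OF ST])
  also have "\<dots> = (\<Sum>c\<in>L S. \<Sum>d\<in>L T. (cmod (UF S U (\<lambda>c'. v (join c' d)) c))\<^sup>2)"
    by (intro sum.cong refl) (simp add: AL_join[OF ST])
  also have "\<dots> = (\<Sum>d\<in>L T. \<Sum>c\<in>L S. (cmod (UF S U (\<lambda>c'. v (join c' d)) c))\<^sup>2)"
    by (rule sum.swap)
  also have "\<dots> = (\<Sum>d\<in>L T. nrm S (UF S U (\<lambda>c'. v (join c' d))))"
    unfolding nrm_def ..
  also have "\<dots> = (\<Sum>d\<in>L T. nrm S (\<lambda>c'. v (join c' d)))"
    by (simp add: unitary_nrm[OF fS U])
  also have "\<dots> = (\<Sum>c\<in>L S. \<Sum>d\<in>L T. (cmod (v (join c d)))\<^sup>2)"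
    unfolding nrm_def by (rule sum.swap)
  also have "\<dots> = tot m v"
    unfolding tot_def by (rule sum_cube_split[OF ST, symmetric])
  finally show ?thesis .
qed

lemma run_tot: "valid_rounds m rs own \<Longrightarrow> tot m (snd (run m rs own v)) = tot m v"
proof (induction rs arbitrary: own v)
  case Nil then show ?case by simp
next
  case (Cons r rs)
  obtain p U q where r: "r = (p, U, q)" by (cases r) auto
  then have "unitary_on (owned m own p) U" "valid_rounds m rs (own(q := \<not> p))"
    using Cons.prems by auto
  note h = this
  have "tot m (snd (run m (r#rs) own v)) = tot m (snd (run m rs (own(q:=\<not>p)) (apply_local m (owned m own p) U v)))"
    using r by simp
  also have "\<dots> = tot m (apply_local m (owned m own p) U v)" using Cons.IH[OF h(2)] .
  also have "\<dots> = tot m v" by (rule apply_local_tot[OF owned_disjp owned_unionp h(1)])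
  finally show ?case .
qed

lemma tot_init: "2 * n \<le> m \<Longrightarrow> tot m (\<lambda>s. if s = init_basis n x y then 1 else 0) = 1"
  unfolding tot_def using init_cube[of n m x y]
  by (simp add: if_distrib[of "\<lambda>z. (cmod z)\<^sup>2"] sum.delta' cube_L L_finite cong: if_cong)

definition alp :: "nat set \<Rightarrow> nat \<Rightarrow> (cfg \<Rightarrow> complex) \<Rightarrow> (cfg \<Rightarrow> complex) \<Rightarrow> complex" where
  "alp S out A A' = (\<Sum>c\<in>L S. if c out then cnj (A c) * A' c else 0)"
definition bet :: "nat set \<Rightarrow> (cfg \<Rightarrow> complex) \<Rightarrow> (cfg \<Rightarrow> complex) \<Rightarrow> complex" where
  "bet T B B' = (\<Sum>d\<in>L T. cnj (B d) * B' d)"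

lemma quad_swap:
  fixes f :: "'c \<Rightarrow> 'w \<Rightarrow> 'v \<Rightarrow> 'a::semiring_0"
  shows "(\<Sum>c\<in>C. \<Sum>d\<in>D. \<Sum>w\<in>W. \<Sum>w'\<in>W'. f c w w' * g d w w') =
   (\<Sum>w\<in>W. \<Sum>w'\<in>W'. (\<Sum>c\<in>C. f c w w') * (\<Sum>d\<in>D. g d w w'))"
proof -
  have "(\<Sum>c\<in>C. \<Sum>d\<in>D. \<Sum>w\<in>W. \<Sum>w'\<in>W'. f c w w' * g d w w') =
        (\<Sum>c\<in>C. \<Sum>w\<in>W. \<Sum>d\<in>D. \<Sum>w'\<in>W'. f c w w' * g d w w')"
    by (rule sum.cong[OF refl], rule sum.swap)
  also have "\<dots> = (\<Sum>c\<in>C. \<Sum>w\<in>W. \<Sum>w'\<in>W'. \<Sum>d\<in>D. f c w w' * g d w w')"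
    by (rule sum.cong[OF refl], rule sum.cong[OF refl], rule sum.swap)
  also have "\<dots> = (\<Sum>w\<in>W. \<Sum>c\<in>C. \<Sum>w'\<in>W'. \<Sum>d\<in>D. f c w w' * g d w w')"
    by (rule sum.swap)
  also have "\<dots> = (\<Sum>w\<in>W. \<Sum>w'\<in>W'. \<Sum>c\<in>C. \<Sum>d\<in>D. f c w w' * g d w w')"
    by (rule sum.cong[OF refl], rule sum.swap)
  also have "\<dots> = (\<Sum>w\<in>W. \<Sum>w'\<in>W'. (\<Sum>c\<in>C. f c w w') * (\<Sum>d\<in>D. g d w w'))"
    by (simp only: sum_product)
  finally show ?thesis .
qed

lemma accept_formula:
  assumes ST: "S \<inter> T = {}" "S \<union> T = {..<m}" and out: "out \<in> S"
    and fs: "\<forall>s\<in>cube m. fs s = (\<Sum>w<N. A w (restr S s) * B w (restr T s))"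
  shows "complex_of_real (\<Sum>s\<in>{s\<in>cube m. s out}. (cmod (fs s))\<^sup>2) =
    (\<Sum>w<N. \<Sum>w'<N. alp S out (A w) (A w') * bet T (B w) (B w'))"
proof -
  have fin: "finite (cube m)" by (simp add: cube_L L_finite)
  have "complex_of_real (\<Sum>s\<in>{s\<in>cube m. s out}. (cmod (fs s))\<^sup>2) =
     (\<Sum>s\<in>{s\<in>cube m. s out}. cnj (fs s) * fs s)"
    unfolding of_real_sum by (rule sum.cong[OF refl]) (subst complex_norm_square, simp add: mult.commute)
  also have "\<dots> = (\<Sum>s\<in>cube m. if s out then cnj (fs s) * fs s else 0)"
    by (rule sum.inter_filter[OF fin])
  also have "\<dots> = (\<Sum>c\<in>L S. \<Sum>d\<in>L T. if join c d out then cnj (fs (join c d)) * fs (join c d) else 0)"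
    by (rule sum_cube_split[OF ST])
  also have "\<dots> = (\<Sum>c\<in>L S. \<Sum>d\<in>L T. \<Sum>w<N. \<Sum>w'<N.
        (if c out then cnj (A w c) * A w' c else 0) * (cnj (B w d) * B w' d))"
  proof (intro sum.cong refl)
    fix c d assume c: "c \<in> L S" and d: "d \<in> L T"
    have jc: "join c d \<in> cube m" using join_L[OF c d] ST by (simp add: cube_L)
    have fj: "fs (join c d) = (\<Sum>w<N. A w c * B w d)"
      using fs jc restr_join1[OF ST(1) c d] restr_join2[OF ST(1) c d] by simp
    have jo: "join c d out = c out" using d out ST unfolding join_def L_mem by auto
    have "cnj (fs (join c d)) * fs (join c d) = (\<Sum>w<N. \<Sum>w'<N. cnj (A w c * B w d) * (A w' c * B w' d))"
      unfolding fj cnj_sum sum_product ..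
    also have "\<dots> = (\<Sum>w<N. \<Sum>w'<N. (cnj (A w c) * A w' c) * (cnj (B w d) * B w' d))"
      by (intro sum.cong refl) (simp add: mult_ac)
    finally show "(if join c d out then cnj (fs (join c d)) * fs (join c d) else 0) =
       (\<Sum>w<N. \<Sum>w'<N. (if c out then cnj (A w c) * A w' c else 0) * (cnj (B w d) * B w' d))"
      using jo by simp
  qed
  also have "\<dots> = (\<Sum>w<N. \<Sum>w'<N. alp S out (A w) (A w') * bet T (B w) (B w'))"
    unfolding alp_def bet_def by (rule quad_swap)
  finally show ?thesis .
qed

lemma cmod_prod_le: "cmod (cnj a * b) \<le> ((cmod a)\<^sup>2 + (cmod b)\<^sup>2) / 2"
proof -
  have e: "cmod (cnj a * b) = cmod a * cmod b" by (simp add: norm_mult)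
  have "0 \<le> (cmod a - cmod b)\<^sup>2" by simp
  hence "2 * (cmod a * cmod b) \<le> (cmod a)\<^sup>2 + (cmod b)\<^sup>2" by (simp add: power2_diff)
  thus ?thesis using e by simp
qed

lemma alp_bound:
  assumes "nrm S A \<le> 1" "nrm S A' \<le> 1"
  shows "cmod (alp S out A A') \<le> 1"
proof -
  have "cmod (alp S out A A') \<le> (\<Sum>c\<in>L S. cmod (if c out then cnj (A c) * A' c else 0))"
    unfolding alp_def by (rule norm_sum)
  also have "\<dots> \<le> (\<Sum>c\<in>L S. ((cmod (A c))\<^sup>2 + (cmod (A' c))\<^sup>2) / 2)"
  proof (rule sum_mono)
    fix c
    have "0 \<le> ((cmod (A c))\<^sup>2 + (cmod (A' c))\<^sup>2) / 2" by simp
    then show "cmod (if c out then cnj (A c) * A' c else 0) \<le> ((cmod (A c))\<^sup>2 + (cmod (A' c))\<^sup>2) / 2"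
      using cmod_prod_le[of "A c" "A' c"] by (cases "c out") simp_all
  qed
  also have "\<dots> = (nrm S A + nrm S A') / 2"
    unfolding nrm_def by (simp only: sum_divide_distrib[symmetric] sum.distrib)
  finally show ?thesis using assms by simp
qed

lemma bet_bound:
  assumes "nrm S A \<le> 1" "nrm S A' \<le> 1"
  shows "cmod (bet S A A') \<le> 1"
proof -
  have "cmod (bet S A A') \<le> (\<Sum>c\<in>L S. cmod (cnj (A c) * A' c))"
    unfolding bet_def by (rule norm_sum)
  also have "\<dots> \<le> (\<Sum>c\<in>L S. ((cmod (A c))\<^sup>2 + (cmod (A' c))\<^sup>2) / 2)"
    by (rule sum_mono) (rule cmod_prod_le)
  also have "\<dots> = (nrm S A + nrm S A') / 2"
    unfolding nrm_def by (simp only: sum_divide_distrib[symmetric] sum.distrib)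
  finally show ?thesis using assms by simp
qed

lemma bet_self: "bet S A A = complex_of_real (nrm S A)"
  unfolding bet_def of_real_nrm ..


abbreviation "initv n x y \<equiv> (\<lambda>s. if s = init_basis n x y then 1 else (0::complex))"

lemma final_state_eq:
  "final_state n P x y = apply_local (nqubits P)
     (owned (nqubits P) (fst (run (nqubits P) (rounds P) (owner0 P) (\<lambda>_. 0))) (fin_player P))
     (fin_unitary P) (snd (run (nqubits P) (rounds P) (owner0 P) (initv n x y)))"
  unfolding final_state_def Let_def
  by (simp add: split_beta run_fst[of _ _ _ "initv n x y" "\<lambda>_. 0"])

lemma protocol_formula:
  fixes P :: protocol
  defines "m \<equiv> nqubits P"
  defines "own' \<equiv> fst (run m (rounds P) (owner0 P) (\<lambda>_. 0))"
  defines "S \<equiv> owned m own' (fin_player P)"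
  defines "T \<equiv> owned m own' (\<not> fin_player P)"
  assumes vp: "valid_protocol n P"
    and D: "DEC m own' N (\<lambda>x y. snd (run m (rounds P) (owner0 P) (initv n x y))) F G"
  shows "complex_of_real (accept_prob n P x y) =
    (\<Sum>w<N. \<Sum>w'<N. alp S (out_qubit P) (UF S (fin_unitary P) ((if fin_player P then F x else G y) w))
                                         (UF S (fin_unitary P) ((if fin_player P then F x else G y) w'))
                    * bet T ((if fin_player P then G y else F x) w) ((if fin_player P then G y else F x) w'))"
proof -
  let ?M = "if fin_player P then F x else G y" and ?O = "if fin_player P then G y else F x"
  let ?V = "snd (run m (rounds P) (owner0 P) (initv n x y))"
  have ST: "S \<inter> T = {}" "S \<union> T = {..<m}" unfolding S_def T_def by (rule owned_disjp, rule owned_unionp)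
  have out: "out_qubit P \<in> S" using vp unfolding valid_protocol_def Let_def S_def owned_def own'_def m_def by auto
  have V: "\<forall>s\<in>cube m. ?V s = (\<Sum>w<N. ?M w (restr S s) * ?O w (restr T s))"
  proof (cases "fin_player P")
    case True
    then show ?thesis using D unfolding DEC_def S_def T_def by simp
  next
    case False
    then show ?thesis using D unfolding DEC_def S_def T_def by (simp add: mult.commute)
  qed
  have fs: "\<forall>s\<in>cube m. final_state n P x y s = (\<Sum>w<N. UF S (fin_unitary P) (?M w) (restr S s) * ?O w (restr T s))"
  proof
    fix s assume s: "s \<in> cube m"
    have "final_state n P x y s = apply_local m S (fin_unitary P) ?V s"
      unfolding final_state_eq S_def own'_def m_def ..
    also have "\<dots> = (\<Sum>w<N. UF S (fin_unitary P) (?M w) (restr S s) * ?O w (restr T s))"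
      by (rule apply_step[OF ST s V])
    finally show "final_state n P x y s = (\<Sum>w<N. UF S (fin_unitary P) (?M w) (restr S s) * ?O w (restr T s))" .
  qed
  show ?thesis unfolding accept_prob_def m_def[symmetric]
    by (rule accept_formula[OF ST out fs])
qed

lemma accept_le1:
  assumes vp: "valid_protocol n P"
  shows "accept_prob n P x y \<le> 1" "0 \<le> accept_prob n P x y"
proof -
  let ?m = "nqubits P"
  let ?own' = "fst (run ?m (rounds P) (owner0 P) (\<lambda>_. 0))"
  have v: "2 * n \<le> ?m" "valid_rounds ?m (rounds P) (owner0 P)" "unitary_on (owned ?m ?own' (fin_player P)) (fin_unitary P)"
    using vp unfolding valid_protocol_def Let_def by auto
  have fin: "finite (cube ?m)" by (simp add: cube_L L_finite)
  have "accept_prob n P x y \<le> tot ?m (final_state n P x y)"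
    unfolding accept_prob_def tot_def by (rule sum_mono2[OF fin]) auto
  also have "\<dots> = tot ?m (snd (run ?m (rounds P) (owner0 P) (initv n x y)))"
    unfolding final_state_eq by (rule apply_local_tot[OF owned_disjp owned_unionp v(3)])
  also have "\<dots> = 1" using run_tot[OF v(2)] tot_init[OF v(1)] by simp
  finally show "accept_prob n P x y \<le> 1" .
  show "0 \<le> accept_prob n P x y" unfolding accept_prob_def by (simp add: sum_nonneg)
qed

lemma protocol_rep:
  assumes vp: "valid_protocol n P"
  shows "\<exists>a b. (\<forall>x y. accept_prob n P x y = Re (\<Sum>w<(2::nat) ^ length (rounds P). \<Sum>w'<(2::nat) ^ length (rounds P). a x w w' * b y w w'))
     \<and> (\<forall>x w w'. cmod (a x w w') \<le> 1) \<and> (\<forall>y w w'. cmod (b y w w') \<le> 1)"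
proof -
  define m where "m = nqubits P"
  define own' where "own' = fst (run m (rounds P) (owner0 P) (\<lambda>_. 0))"
  define S where "S = owned m own' (fin_player P)"
  define T where "T = owned m own' (\<not> fin_player P)"
  define N where "N = (2::nat) ^ length (rounds P)"
  have v: "2 * n \<le> m" "\<forall>i<n. owner0 P i" "\<forall>i. n \<le> i \<and> i < 2 * n \<longrightarrow> \<not> owner0 P i"
    "valid_rounds m (rounds P) (owner0 P)" "unitary_on S (fin_unitary P)"
    using vp unfolding valid_protocol_def Let_def m_def S_def own'_def by auto
  obtain F G where D: "DEC m own' N (\<lambda>x y. snd (run m (rounds P) (owner0 P) (initv n x y))) F G"
    using run_dec[OF v(4) init_dec[OF v(1-3)]] unfolding own'_def N_def by auto
  have fS: "finite S" unfolding S_def by (rule owned_finite)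
  have nF: "nrm (owned m own' True) (F x w) \<le> 1" if "w < N" for x w using D that unfolding DEC_def by auto
  have nG: "nrm (owned m own' False) (G y w) \<le> 1" if "w < N" for y w using D that unfolding DEC_def by auto
  have uS: "nrm S (UF S (fin_unitary P) h) = nrm S h" for h by (rule unitary_nrm[OF fS v(5)])
  show ?thesis
  proof (cases "fin_player P")
    case True
    have nS: "nrm S (F x w) \<le> 1" if "w < N" for x w using nF[OF that] True S_def by simp
    define a where "a x w w' = (if w < N \<and> w' < N then alp S (out_qubit P) (UF S (fin_unitary P) (F x w)) (UF S (fin_unitary P) (F x w')) else 0)" for x w w'
    define b where "b y w w' = (if w < N \<and> w' < N then bet T (G y w) (G y w') else 0)" for y w w'
    have "accept_prob n P x y = Re (\<Sum>w<N. \<Sum>w'<N. a x w w' * b y w w')" for x y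
    proof -
      have "complex_of_real (accept_prob n P x y) = (\<Sum>w<N. \<Sum>w'<N. a x w w' * b y w w')"
        unfolding protocol_formula[OF vp D[unfolded m_def own'_def]] a_def b_def
        using True by (simp add: S_def T_def m_def own'_def)
      then show ?thesis by (metis Re_complex_of_real)
    qed
    moreover have "cmod (a x w w') \<le> 1" for x w w'
      unfolding a_def by (auto intro!: alp_bound simp: uS nS)
    moreover have "cmod (b y w w') \<le> 1" for y w w'
      unfolding b_def using nG True by (auto intro!: bet_bound simp: T_def)
    ultimately show ?thesis unfolding N_def by blast
  next
    case False
    have nS: "nrm S (G y w) \<le> 1" if "w < N" for y w using nG[OF that] False S_def by simp
    define a where "a x w w' = (if w < N \<and> w' < N then bet T (F x w) (F x w') else 0)" for x w w'
    define b where "b y w w' = (if w < N \<and> w' < N then alp S (out_qubit P) (UF S (fin_unitary P) (G y w)) (UF S (fin_unitary P) (G y w')) else 0)" for y w w'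
    have "accept_prob n P x y = Re (\<Sum>w<N. \<Sum>w'<N. a x w w' * b y w w')" for x y
    proof -
      have "complex_of_real (accept_prob n P x y) = (\<Sum>w<N. \<Sum>w'<N. a x w w' * b y w w')"
        unfolding protocol_formula[OF vp D[unfolded m_def own'_def]] a_def b_def
        using False by (simp add: S_def T_def m_def own'_def mult.commute)
      then show ?thesis by (metis Re_complex_of_real)
    qed
    moreover have "cmod (a x w w') \<le> 1" for x w w'
      unfolding a_def using nF False by (auto intro!: bet_bound simp: T_def)
    moreover have "cmod (b y w w') \<le> 1" for y w w'
      unfolding b_def by (auto intro!: alp_bound simp: uS nS)
    ultimately show ?thesis unfolding N_def by blast
  qed
qed

lemma protocol_zero:
  assumes vp: "valid_protocol n P" and r0: "rounds P = []"
  shows "(\<forall>x y y'. accept_prob n P x y = accept_prob n P x y') \<or> (\<forall>x x' y. accept_prob n P x y = accept_prob n P x' y)"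
proof -
  define m where "m = nqubits P"
  define own' where "own' = fst (run m (rounds P) (owner0 P) (\<lambda>_. 0))"
  have o: "own' = owner0 P" unfolding own'_def r0 by simp
  define S where "S = owned m own' (fin_player P)"
  define T where "T = owned m own' (\<not> fin_player P)"
  have v: "2 * n \<le> m" "\<forall>i<n. owner0 P i" "\<forall>i. n \<le> i \<and> i < 2 * n \<longrightarrow> \<not> owner0 P i"
    using vp unfolding valid_protocol_def Let_def m_def by auto
  have D: "DEC m own' 1 (\<lambda>x y. snd (run m (rounds P) (owner0 P) (initv n x y))) (F0 n m own') (G0 n m own')"
    unfolding r0 o using init_dec[OF v] by simp
  have fT: "finite T" unfolding T_def by (rule owned_finite)
  have F: "complex_of_real (accept_prob n P x y) =
    alp S (out_qubit P) (UF S (fin_unitary P) ((if fin_player P then F0 n m own' x else G0 n m own' y) 0))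
                                         (UF S (fin_unitary P) ((if fin_player P then F0 n m own' x else G0 n m own' y) 0))
                    * bet T ((if fin_player P then G0 n m own' y else F0 n m own' x) 0) ((if fin_player P then G0 n m own' y else F0 n m own' x) 0)" for x y
    using protocol_formula[OF vp D[unfolded m_def own'_def]] unfolding S_def T_def m_def own'_def by simp
  show ?thesis
  proof (cases "fin_player P")
    case True
    have "bet T (G0 n m own' y 0) (G0 n m own' y 0) = 1" for y
      unfolding bet_self G0_def using True
      by (subst nrm_delta[OF fT]) (simp add: T_def restr_L)
    then have "complex_of_real (accept_prob n P x y) = alp S (out_qubit P) (UF S (fin_unitary P) (F0 n m own' x 0)) (UF S (fin_unitary P) (F0 n m own' x 0))" for x y
      using F[of x y] True by simp
    then have "accept_prob n P x y = accept_prob n P x y'" for x y y'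
      by (metis of_real_eq_iff)
    then show ?thesis by blast
  next
    case False
    have "bet T (F0 n m own' x 0) (F0 n m own' x 0) = 1" for x
      unfolding bet_self F0_def using False
      by (subst nrm_delta[OF fT]) (simp add: T_def restr_L)
    then have "complex_of_real (accept_prob n P x y) = alp S (out_qubit P) (UF S (fin_unitary P) (G0 n m own' y 0)) (UF S (fin_unitary P) (G0 n m own' y 0))" for x y
      using F[of x y] False by simp
    then have "accept_prob n P x y = accept_prob n P x' y" for x x' y
      by (metis of_real_eq_iff)
    then show ?thesis by blast
  qed
qed


inductive dec :: "real \<Rightarrow> (cfg \<Rightarrow> cfg \<Rightarrow> real) \<Rightarrow> bool" where
  rank1: "(\<forall>x. \<bar>a x\<bar> \<le> 1) \<Longrightarrow> (\<forall>y. \<bar>b y\<bar> \<le> 1) \<Longrightarrow> dec 1 (\<lambda>x y. a x * b y)"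
| scale: "dec W H \<Longrightarrow> dec (\<bar>c\<bar> * W) (\<lambda>x y. c * H x y)"
| add: "dec W1 H1 \<Longrightarrow> dec W2 H2 \<Longrightarrow> dec (W1 + W2) (\<lambda>x y. H1 x y + H2 x y)"
| zero: "dec 0 (\<lambda>x y. 0)"
| mono: "dec W H \<Longrightarrow> W \<le> W' \<Longrightarrow> dec W' H"

lemma dec_nonneg: "dec W H \<Longrightarrow> 0 \<le> W"
  by (induction rule: dec.induct) auto

lemma dec_mult_rank1:
  assumes "dec W H" "\<forall>x. \<bar>a x\<bar> \<le> 1" "\<forall>y. \<bar>b y\<bar> \<le> 1"
  shows "dec W (\<lambda>x y. (a x * b y) * H x y)"
  using assms
proof (induction rule: dec.induct)
  case (rank1 a' b')
  have "dec 1 (\<lambda>x y. (a x * a' x) * (b y * b' y))"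
    using rank1 by (intro dec.rank1) (auto simp: abs_mult intro: mult_le_one)
  then show ?case by (simp add: mult_ac)
next
  case (scale W H c)
  then have "dec (\<bar>c\<bar> * W) (\<lambda>x y. c * ((a x * b y) * H x y))" by (intro dec.scale) auto
  then show ?case by (simp add: mult_ac)
next
  case (add W1 H1 W2 H2)
  then have "dec (W1 + W2) (\<lambda>x y. (a x * b y) * H1 x y + (a x * b y) * H2 x y)" by (intro dec.add) auto
  then show ?case by (simp add: distrib_left)
next
  case zero
  then show ?case using dec.zero by simp
next
  case (mono W H W')
  then show ?case using dec.mono by blast
qed

lemma dec_mult:
  assumes "dec W1 H1" "dec W2 H2"
  shows "dec (W1 * W2) (\<lambda>x y. H1 x y * H2 x y)"
  using assms
proof (induction rule: dec.induct)
  case (rank1 a b)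
  then show ?case using dec_mult_rank1[OF rank1(3) rank1(1,2)] by simp
next
  case (scale W H c)
  then have "dec (\<bar>c\<bar> * (W * W2)) (\<lambda>x y. c * (H x y * H2 x y))" by (intro dec.scale) auto
  then show ?case by (simp add: mult_ac)
next
  case (add W1 H1 W1' H1')
  then have "dec (W1 * W2 + W1' * W2) (\<lambda>x y. H1 x y * H2 x y + H1' x y * H2 x y)" by (intro dec.add) auto
  then show ?case by (simp add: distrib_right)
next
  case zero
  then show ?case using dec.zero by simp
next
  case (mono W H W')
  have "W * W2 \<le> W' * W2" using mono dec_nonneg[OF mono(4)] by (intro mult_right_mono) auto
  then show ?case using mono dec.mono by blast
qed

lemma dec_one: "dec 1 (\<lambda>x y. 1)"
  using dec.rank1[of "\<lambda>_. 1" "\<lambda>_. 1"] by simp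

lemma dec_pow: "dec W H \<Longrightarrow> dec (W ^ j) (\<lambda>x y. H x y ^ j)"
proof (induction j)
  case 0 then show ?case using dec_one by simp
next
  case (Suc j)
  then show ?case using dec_mult[OF Suc(2) Suc.IH[OF Suc(2)]] by simp
qed

lemma dec_sum:
  assumes "finite I" "\<forall>i\<in>I. dec (W i) (H i)"
  shows "dec (\<Sum>i\<in>I. W i) (\<lambda>x y. \<Sum>i\<in>I. H i x y)"
  using assms
proof (induction rule: finite_induct)
  case empty then show ?case using dec.zero by simp
next
  case (insert i I)
  then show ?case using dec.add[of "W i" "H i" "\<Sum>i\<in>I. W i" "\<lambda>x y. \<Sum>i\<in>I. H i x y"] by simp
qed

lemma dec_diff:
  assumes "dec W1 H1" "dec W2 H2"
  shows "dec (W1 + W2) (\<lambda>x y. H1 x y - H2 x y)"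
proof -
  have "dec (\<bar>-1\<bar> * W2) (\<lambda>x y. (-1) * H2 x y)" by (rule dec.scale[OF assms(2)])
  then have "dec (W1 + W2) (\<lambda>x y. H1 x y + (-1) * H2 x y)" using dec.add[OF assms(1)] by fastforce
  then show ?thesis by simp
qed

lemma dec_Re_sum:
  fixes a b :: "cfg \<Rightarrow> nat \<Rightarrow> nat \<Rightarrow> complex"
  assumes "\<forall>x w w'. cmod (a x w w') \<le> 1" "\<forall>y w w'. cmod (b y w w') \<le> 1"
  shows "dec (2 * real N * real N) (\<lambda>x y. Re (\<Sum>w<N. \<Sum>w'<N. a x w w' * b y w w'))"
proof -
  have t: "dec 2 (\<lambda>x y. Re (a x w w' * b y w w'))" for w w'
  proof -
    have "dec 1 (\<lambda>x y. Re (a x w w') * Re (b y w w'))"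
      using assms by (intro dec.rank1) (auto intro: order_trans[OF abs_Re_le_cmod])
    moreover have "dec 1 (\<lambda>x y. Im (a x w w') * Im (b y w w'))"
      using assms by (intro dec.rank1) (auto intro: order_trans[OF abs_Im_le_cmod])
    ultimately have "dec (1 + 1) (\<lambda>x y. Re (a x w w') * Re (b y w w') - Im (a x w w') * Im (b y w w'))"
      by (rule dec_diff)
    then show ?thesis by simp
  qed
  have "dec (\<Sum>w<N. \<Sum>w'<N. 2) (\<lambda>x y. \<Sum>w<N. \<Sum>w'<N. Re (a x w w' * b y w w'))"
    using t by (intro dec_sum ballI) auto
  then show ?thesis by (simp add: mult_ac)
qed

definition amp :: "nat \<Rightarrow> real \<Rightarrow> real" where
  "amp e p = (\<Sum>i\<in>{e<..2*e}. real (2*e choose i) * p ^ i * (1 - p) ^ (2*e - i))"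

lemma choose_sub_sum: "(\<Sum>i\<in>{e<..2*e}. real (2*e choose i)) \<le> 4 ^ e"
proof -
  have "(\<Sum>i\<in>{e<..2*e}. real (2*e choose i)) \<le> (\<Sum>i\<in>{..2*e}. real (2*e choose i))"
    by (intro sum_mono2) auto
  also have "\<dots> = 2 ^ (2*e)" using choose_row_sum[of "2*e"] by (metis of_nat_numeral of_nat_power of_nat_sum)
  also have "\<dots> = 4 ^ e" by (simp add: power_mult)
  finally show ?thesis .
qed

lemma dec_amp:
  assumes "dec W P"
  shows "dec (4 ^ e * (1 + W) ^ (2*e)) (\<lambda>x y. amp e (P x y))"
proof -
  have W0: "0 \<le> W" by (rule dec_nonneg[OF assms])
  have Q: "dec (1 + W) (\<lambda>x y. 1 - P x y)" by (rule dec_diff[OF dec_one assms])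
  have t: "dec (real (2*e choose i) * (1 + W) ^ (2*e)) (\<lambda>x y. real (2*e choose i) * P x y ^ i * (1 - P x y) ^ (2*e - i))"
    if i: "i \<in> {e<..2*e}" for i
  proof -
    have d1: "dec (W ^ i * (1 + W) ^ (2*e - i)) (\<lambda>x y. P x y ^ i * (1 - P x y) ^ (2*e - i))"
      by (rule dec_mult[OF dec_pow[OF assms] dec_pow[OF Q]])
    have "W ^ i * (1 + W) ^ (2*e - i) \<le> (1 + W) ^ i * (1 + W) ^ (2*e - i)"
      using W0 by (intro mult_right_mono power_mono) auto
    also have "(1 + W) ^ i * (1 + W) ^ (2*e - i) = (1 + W) ^ (2*e)"
    proof -
      have "i + (2*e - i) = 2*e" using i by simp
      then show ?thesis by (metis power_add)
    qed
    finally have d2: "dec ((1 + W) ^ (2*e)) (\<lambda>x y. P x y ^ i * (1 - P x y) ^ (2*e - i))"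
      by (rule dec.mono[OF d1])
    have "dec (\<bar>real (2*e choose i)\<bar> * (1 + W) ^ (2*e)) (\<lambda>x y. real (2*e choose i) * (P x y ^ i * (1 - P x y) ^ (2*e - i)))"
      by (rule dec.scale[OF d2])
    then show ?thesis by (simp only: abs_of_nat mult.assoc)
  qed
  have "dec (\<Sum>i\<in>{e<..2*e}. real (2*e choose i) * (1 + W) ^ (2*e))
      (\<lambda>x y. \<Sum>i\<in>{e<..2*e}. real (2*e choose i) * P x y ^ i * (1 - P x y) ^ (2*e - i))"
    by (rule dec_sum) (use t in auto)
  moreover have "(\<Sum>i\<in>{e<..2*e}. real (2*e choose i) * (1 + W) ^ (2*e)) \<le> 4 ^ e * (1 + W) ^ (2*e)"
    unfolding sum_distrib_right[symmetric] using W0 by (intro mult_right_mono choose_sub_sum) auto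
  ultimately have "dec (4 ^ e * (1 + W) ^ (2*e))
      (\<lambda>x y. \<Sum>i\<in>{e<..2*e}. real (2*e choose i) * P x y ^ i * (1 - P x y) ^ (2*e - i))"
    by (rule dec.mono)
  then show ?thesis unfolding amp_def .
qed

lemma amp_split:
  "amp e p + (\<Sum>i\<in>{..e}. real (2*e choose i) * p ^ i * (1 - p) ^ (2*e - i)) = 1"
proof -
  have "(\<Sum>i\<in>{..2*e}. real (2*e choose i) * p ^ i * (1 - p) ^ (2*e - i)) = (p + (1 - p)) ^ (2*e)"
    by (rule binomial_ring[symmetric])
  also have "\<dots> = 1" by simp
  moreover have "{..2*e} = {..e} \<union> {e<..2*e}" by auto
  moreover have "(\<Sum>i\<in>{..e} \<union> {e<..2*e}. real (2*e choose i) * p ^ i * (1 - p) ^ (2*e - i)) =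
     (\<Sum>i\<in>{..e}. real (2*e choose i) * p ^ i * (1 - p) ^ (2*e - i)) + amp e p"
    unfolding amp_def by (rule sum.union_disjoint) auto
  ultimately show ?thesis by simp
qed

lemma pq_bound:
  fixes p :: real
  assumes "0 \<le> p" "p \<le> 1" "p \<le> 1/3 \<or> 2/3 \<le> p"
  shows "p * (1 - p) \<le> 2/9"
proof -
  have "0 \<le> (3*p - 1)*(3*p - 2)"
  proof (cases "p \<le> 1/3")
    case True then show ?thesis by (intro mult_nonpos_nonpos) auto
  next
    case False then show ?thesis using assms(3) by (intro mult_nonneg_nonneg) auto
  qed
  moreover have "(3*p - 1)*(3*p - 2) = 9*(p*p) - 9*p + 2" by (simp add: algebra_simps)
  ultimately have h: "0 \<le> 9*(p*p) - 9*p + 2" by simp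
  have "p * (1 - p) = p - p*p" by (simp add: algebra_simps)
  with h show ?thesis by simp
qed

lemma amp_err:
  assumes p: "0 \<le> p" "p \<le> 1"
  shows "p \<le> 1/3 \<Longrightarrow> \<bar>amp e p\<bar> \<le> (8/9) ^ e"
    and "2/3 \<le> p \<Longrightarrow> \<bar>amp e p - 1\<bar> \<le> (8/9) ^ e"
proof -
  let ?q = "1 - p"
  have q: "0 \<le> ?q" using p by simp
  let ?lo = "\<Sum>i\<in>{..e}. real (2*e choose i) * p ^ i * ?q ^ (2*e - i)"
  have amp0: "0 \<le> amp e p" unfolding amp_def using p q by (intro sum_nonneg) auto
  have lo0: "0 \<le> ?lo" using p q by (intro sum_nonneg) auto
  have pq: "(p * ?q) ^ e \<le> (2/9) ^ e" if "p \<le> 1/3 \<or> 2/3 \<le> p"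
    using pq_bound[OF p that] p q by (intro power_mono) auto
  {
    assume a: "p \<le> 1/3"
    have pleq: "p \<le> ?q" using a by simp
    have "amp e p \<le> (\<Sum>i\<in>{e<..2*e}. real (2*e choose i) * (p * ?q) ^ e)"
      unfolding amp_def
    proof (rule sum_mono)
      fix i assume i: "i \<in> {e<..2*e}"
      have "p ^ i * ?q ^ (2*e - i) = p ^ e * (p ^ (i - e) * ?q ^ (2*e - i))"
        using i by (simp add: power_add[symmetric])
      also have "\<dots> \<le> p ^ e * (?q ^ (i - e) * ?q ^ (2*e - i))"
        using p q pleq by (intro mult_left_mono mult_right_mono power_mono) auto
      also have "\<dots> = (p * ?q) ^ e"
        using i by (simp add: power_add[symmetric] power_mult_distrib)
      finally show "real (2*e choose i) * p ^ i * ?q ^ (2*e - i) \<le> real (2*e choose i) * (p * ?q) ^ e"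
        by (simp add: mult.assoc mult_left_mono)
    qed
    also have "\<dots> = (\<Sum>i\<in>{e<..2*e}. real (2*e choose i)) * (p * ?q) ^ e" by (simp add: sum_distrib_right)
    also have "\<dots> \<le> 4 ^ e * (2/9) ^ e"
      using pq a p q by (intro mult_mono choose_sub_sum) auto
    also have "\<dots> = (8/9) ^ e" by (simp add: power_mult_distrib[symmetric])
    finally show "\<bar>amp e p\<bar> \<le> (8/9) ^ e" using amp0 by simp
  }
  {
    assume a: "2/3 \<le> p"
    have qlep: "?q \<le> p" using a by simp
    have "?lo \<le> (\<Sum>i\<in>{..e}. real (2*e choose i) * (p * ?q) ^ e)"
    proof (rule sum_mono)
      fix i assume i: "i \<in> {..e}"
      have ei: "2*e - i = (e - i) + e" using i by auto
      have "p ^ i * ?q ^ (2*e - i) = p ^ i * (?q ^ (e - i) * ?q ^ e)"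
        by (simp only: ei power_add)
      also have "\<dots> \<le> p ^ i * (p ^ (e - i) * ?q ^ e)"
        using p q qlep by (intro mult_left_mono mult_right_mono power_mono) auto
      also have "\<dots> = (p * ?q) ^ e"
        using i by (simp add: mult.assoc[symmetric] power_add[symmetric] power_mult_distrib)
      finally show "real (2*e choose i) * p ^ i * ?q ^ (2*e - i) \<le> real (2*e choose i) * (p * ?q) ^ e"
        by (simp add: mult.assoc mult_left_mono)
    qed
    also have "\<dots> = (\<Sum>i\<in>{..e}. real (2*e choose i)) * (p * ?q) ^ e" by (simp add: sum_distrib_right)
    also have "\<dots> \<le> 4 ^ e * (2/9) ^ e"
    proof (intro mult_mono)
      have "(\<Sum>i\<in>{..e}. real (2*e choose i)) \<le> (\<Sum>i\<in>{..2*e}. real (2*e choose i))"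
        by (intro sum_mono2) auto
      also have "\<dots> = 2 ^ (2*e)" using choose_row_sum[of "2*e"] by (metis of_nat_numeral of_nat_power of_nat_sum)
      also have "\<dots> = 4 ^ e" by (simp add: power_mult)
      finally show "(\<Sum>i\<in>{..e}. real (2*e choose i)) \<le> 4 ^ e" .
    qed (use pq a p q in auto)
    also have "\<dots> = (8/9) ^ e" by (simp add: power_mult_distrib[symmetric])
    finally have "?lo \<le> (8/9) ^ e" .
    moreover have "amp e p - 1 = - ?lo" using amp_split[of e p] by simp
    ultimately show "\<bar>amp e p - 1\<bar> \<le> (8/9) ^ e" using lo0 by simp
  }
qed


definition ps :: "bool \<Rightarrow> bool \<Rightarrow> real" where "ps a b = (if a \<and> b then -1/2 else 1/6)"
definition mu1 :: "bool \<Rightarrow> real" where "mu1 a = (if a then 2/3 else 1/3)"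
definition Psi :: "nat set \<Rightarrow> cfg \<Rightarrow> cfg \<Rightarrow> real" where "Psi Z u v = (\<Prod>i\<in>Z. ps (u i) (v i))"
definition Mu :: "nat set \<Rightarrow> cfg \<Rightarrow> real" where "Mu Z u = (\<Prod>i\<in>Z. mu1 (u i))"
definition ka :: "bool \<Rightarrow> bool \<Rightarrow> real" where
  "ka b b' = ps False b * ps False b' / mu1 False + ps True b * ps True b' / mu1 True"
definition sg :: "nat set \<Rightarrow> cfg \<Rightarrow> real" where "sg Z w = (-1) ^ card {i\<in>Z. w i}"

lemma prod_sum_L:
  fixes f :: "nat \<Rightarrow> bool \<Rightarrow> real"
  assumes "finite Z"
  shows "(\<Sum>u\<in>L Z. \<Prod>i\<in>Z. f i (u i)) = (\<Prod>i\<in>Z. f i False + f i True)"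
  using assms
proof (induction rule: finite_induct)
  case empty then show ?case by (simp add: L_empty)
next
  case (insert j Z)
  have "(\<Sum>u\<in>L (insert j Z). \<Prod>i\<in>insert j Z. f i (u i)) =
      (\<Sum>u\<in>L Z. (\<Prod>i\<in>insert j Z. f i (u i)) + (\<Prod>i\<in>insert j Z. f i ((u(j:=True)) i)))"
    by (rule L_insert_sum[OF insert(2,1)])
  also have "\<dots> = (\<Sum>u\<in>L Z. (f j False + f j True) * (\<Prod>i\<in>Z. f i (u i)))"
  proof (rule sum.cong[OF refl])
    fix u assume u: "u \<in> L Z"
    have uj: "u j = False" using u insert(2) unfolding L_mem by auto
    have eq: "(\<Prod>i\<in>Z. f i ((u(j:=True)) i)) = (\<Prod>i\<in>Z. f i (u i))"
      using insert(2) by (intro prod.cong refl) auto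
    have p1: "(\<Prod>i\<in>insert j Z. f i (u i)) = f j False * (\<Prod>i\<in>Z. f i (u i))"
      using insert(1,2) uj by simp
    have p2: "(\<Prod>i\<in>insert j Z. f i ((u(j:=True)) i)) = f j True * (\<Prod>i\<in>Z. f i (u i))"
      using insert(1,2) by (subst prod.insert) (auto simp only: eq fun_upd_same)
    show "(\<Prod>i\<in>insert j Z. f i (u i)) + (\<Prod>i\<in>insert j Z. f i ((u(j:=True)) i)) =
        (f j False + f j True) * (\<Prod>i\<in>Z. f i (u i))"
      unfolding p1 p2 by (rule distrib_right[symmetric])
  qed
  also have "\<dots> = (f j False + f j True) * (\<Prod>i\<in>Z. f i False + f i True)"
    by (simp add: sum_distrib_left[symmetric] insert.IH)
  also have "\<dots> = (\<Prod>i\<in>insert j Z. f i False + f i True)"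
    using insert(1,2) by simp
  finally show ?case .
qed

lemma prod_sum_L2:
  fixes f :: "bool \<Rightarrow> bool \<Rightarrow> real"
  assumes "finite Z"
  shows "(\<Sum>u\<in>L Z. \<Sum>v\<in>L Z. \<Prod>i\<in>Z. f (u i) (v i)) =
         (f False False + f False True + f True False + f True True) ^ card Z"
proof -
  have "(\<Sum>u\<in>L Z. \<Sum>v\<in>L Z. \<Prod>i\<in>Z. f (u i) (v i)) = (\<Sum>u\<in>L Z. \<Prod>i\<in>Z. f (u i) False + f (u i) True)"
    by (intro sum.cong refl) (rule prod_sum_L[OF assms])
  also have "\<dots> = (\<Prod>i\<in>Z. (f False False + f False True) + (f True False + f True True))"
    by (rule prod_sum_L[OF assms])
  finally show ?thesis by (simp add: add.assoc)
qed

lemma Psi_insert: "finite Z \<Longrightarrow> j \<notin> Z \<Longrightarrow> Psi (insert j Z) u v = ps (u j) (v j) * Psi Z u v"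
  unfolding Psi_def by simp

lemma Psi_upd: "j \<notin> Z \<Longrightarrow> Psi Z (u(j:=a)) (v(j:=b)) = Psi Z u v"
  unfolding Psi_def by (intro prod.cong refl) auto
lemma Psi_upd1: "j \<notin> Z \<Longrightarrow> Psi Z (u(j:=a)) v = Psi Z u v"
  unfolding Psi_def by (intro prod.cong refl) auto
lemma Psi_upd2: "j \<notin> Z \<Longrightarrow> Psi Z u (v(j:=b)) = Psi Z u v"
  unfolding Psi_def by (intro prod.cong refl) auto

lemma sg_insert1: "finite Z \<Longrightarrow> j \<notin> Z \<Longrightarrow> w \<in> L Z \<Longrightarrow> sg (insert j Z) w = sg Z w"
proof -
  assume a: "finite Z" "j \<notin> Z" "w \<in> L Z"
  then have "{i\<in>insert j Z. w i} = {i\<in>Z. w i}" unfolding L_mem by auto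
  then show ?thesis unfolding sg_def by simp
qed

lemma sg_insert2: "finite Z \<Longrightarrow> j \<notin> Z \<Longrightarrow> w \<in> L Z \<Longrightarrow> sg (insert j Z) (w(j:=True)) = - sg Z w"
proof -
  assume a: "finite Z" "j \<notin> Z" "w \<in> L Z"
  then have "{i\<in>insert j Z. (w(j:=True)) i} = insert j {i\<in>Z. w i}" unfolding L_mem by auto
  moreover have "card (insert j {i\<in>Z. w i}) = Suc (card {i\<in>Z. w i})" using a by simp
  ultimately show ?thesis unfolding sg_def by simp
qed

lemma correlation:
  assumes "finite Z"
  shows "(\<Sum>u\<in>L Z. \<Sum>v\<in>L Z. Psi Z u v * G (\<lambda>i. u i \<and> v i)) = (1/2) ^ card Z * (\<Sum>w\<in>L Z. G w * sg Z w)"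
  using assms
proof (induction Z arbitrary: G rule: finite_induct)
  case empty then show ?case by (simp add: L_empty Psi_def sg_def)
next
  case (insert j Z)
  note fin = insert(1) and jZ = insert(2)
  let ?w = "\<lambda>u v. (\<lambda>i. u i \<and> v i)"
  have step: "(\<Sum>v\<in>L (insert j Z). Psi (insert j Z) u v * G (?w u v)) + (\<Sum>v\<in>L (insert j Z). Psi (insert j Z) (u(j:=True)) v * G (?w (u(j:=True)) v))
      = (\<Sum>v\<in>L Z. (1/2) * (Psi Z u v * G (?w u v)) - (1/2) * (Psi Z u v * G ((?w u v)(j:=True))))"
    if u: "u \<in> L Z" for u
  proof -
    have uj: "u j = False" using u jZ unfolding L_mem by auto
    have "(\<Sum>v\<in>L (insert j Z). Psi (insert j Z) u v * G (?w u v)) + (\<Sum>v\<in>L (insert j Z). Psi (insert j Z) (u(j:=True)) v * G (?w (u(j:=True)) v))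
      = (\<Sum>v\<in>L Z. Psi (insert j Z) u v * G (?w u v) + Psi (insert j Z) u (v(j:=True)) * G (?w u (v(j:=True))))
      + (\<Sum>v\<in>L Z. Psi (insert j Z) (u(j:=True)) v * G (?w (u(j:=True)) v) + Psi (insert j Z) (u(j:=True)) (v(j:=True)) * G (?w (u(j:=True)) (v(j:=True))))"
      by (simp only: L_insert_sum[OF jZ fin])
    also have "\<dots> = (\<Sum>v\<in>L Z. (1/2) * (Psi Z u v * G (?w u v)) - (1/2) * (Psi Z u v * G ((?w u v)(j:=True))))"
      unfolding sum.distrib[symmetric]
    proof (rule sum.cong[OF refl])
      fix v assume v: "v \<in> L Z"
      have vj: "v j = False" using v jZ unfolding L_mem by auto
      have e1: "?w u (v(j:=True)) = ?w u v" using uj by (auto simp: fun_eq_iff)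
      have e2: "?w (u(j:=True)) v = ?w u v" using vj by (auto simp: fun_eq_iff)
      have e3: "?w (u(j:=True)) (v(j:=True)) = (?w u v)(j:=True)" by (auto simp: fun_eq_iff)
      show "Psi (insert j Z) u v * G (?w u v) + Psi (insert j Z) u (v(j:=True)) * G (?w u (v(j:=True))) +
          (Psi (insert j Z) (u(j:=True)) v * G (?w (u(j:=True)) v) + Psi (insert j Z) (u(j:=True)) (v(j:=True)) * G (?w (u(j:=True)) (v(j:=True))))
          = (1/2) * (Psi Z u v * G (?w u v)) - (1/2) * (Psi Z u v * G ((?w u v)(j:=True)))"
        unfolding e1 e2 e3 using uj vj fin jZ
        by (simp add: Psi_insert Psi_upd Psi_upd1 Psi_upd2 ps_def algebra_simps)
    qed
    finally show ?thesis .
  qed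
  have "(\<Sum>u\<in>L (insert j Z). \<Sum>v\<in>L (insert j Z). Psi (insert j Z) u v * G (?w u v))
     = (\<Sum>u\<in>L Z. \<Sum>v\<in>L Z. (1/2) * (Psi Z u v * G (?w u v)) - (1/2) * (Psi Z u v * G ((?w u v)(j:=True))))"
    by (simp only: L_insert_sum[OF jZ fin, of "\<lambda>u. \<Sum>v\<in>L (insert j Z). Psi (insert j Z) u v * G (?w u v)"])
       (rule sum.cong[OF refl], rule step)
  also have "\<dots> = (1/2) * (\<Sum>u\<in>L Z. \<Sum>v\<in>L Z. Psi Z u v * G (?w u v))
                 - (1/2) * (\<Sum>u\<in>L Z. \<Sum>v\<in>L Z. Psi Z u v * G ((?w u v)(j:=True)))"
    by (simp add: sum_subtractf sum_distrib_left)
  also have "\<dots> = (1/2) * ((1/2) ^ card Z * (\<Sum>w\<in>L Z. G w * sg Z w))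
                 - (1/2) * ((1/2) ^ card Z * (\<Sum>w\<in>L Z. G (w(j:=True)) * sg Z w))"
  proof -
    have ih1: "(\<Sum>u\<in>L Z. \<Sum>v\<in>L Z. Psi Z u v * G (?w u v)) = (1/2) ^ card Z * (\<Sum>w\<in>L Z. G w * sg Z w)"
      by (rule insert.IH)
    have ih2: "(\<Sum>u\<in>L Z. \<Sum>v\<in>L Z. Psi Z u v * G ((?w u v)(j:=True))) = (1/2) ^ card Z * (\<Sum>w\<in>L Z. G (w(j:=True)) * sg Z w)"
      using insert.IH[of "\<lambda>w. G (w(j:=True))"] by simp
    show ?thesis unfolding ih1 ih2 ..
  qed
  also have "\<dots> = (1/2) ^ card (insert j Z) * (\<Sum>w\<in>L Z. G w * sg Z w - G (w(j:=True)) * sg Z w)"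
    using fin jZ by (simp add: sum_subtractf algebra_simps)
  also have "\<dots> = (1/2) ^ card (insert j Z) * (\<Sum>w\<in>L (insert j Z). G w * sg (insert j Z) w)"
    by (simp only: L_insert_sum[OF jZ fin], intro arg_cong2[where f = "(*)"] refl sum.cong)
       (simp add: sg_insert1[OF fin jZ] sg_insert2[OF fin jZ])
  finally show ?case .
qed

lemma abs_Psi_sum: "finite Z \<Longrightarrow> (\<Sum>u\<in>L Z. \<Sum>v\<in>L Z. \<bar>Psi Z u v\<bar>) = 1"
proof -
  assume fin: "finite Z"
  have "(\<Sum>u\<in>L Z. \<Sum>v\<in>L Z. \<bar>Psi Z u v\<bar>) = (\<Sum>u\<in>L Z. \<Sum>v\<in>L Z. \<Prod>i\<in>Z. (\<lambda>a b. \<bar>ps a b\<bar>) (u i) (v i))"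
    unfolding Psi_def abs_prod ..
  also have "\<dots> = (\<bar>ps False False\<bar> + \<bar>ps False True\<bar> + \<bar>ps True False\<bar> + \<bar>ps True True\<bar>) ^ card Z"
    by (rule prod_sum_L2[OF fin])
  also have "\<dots> = 1" by (simp add: ps_def)
  finally show ?thesis .
qed

lemma Mu_sum: "finite Z \<Longrightarrow> (\<Sum>u\<in>L Z. Mu Z u) = 1"
proof -
  assume fin: "finite Z"
  have "(\<Sum>u\<in>L Z. Mu Z u) = (\<Sum>u\<in>L Z. \<Prod>i\<in>Z. (\<lambda>i a. mu1 a) i (u i))"
    unfolding Mu_def ..
  also have "\<dots> = (\<Prod>i\<in>Z. mu1 False + mu1 True)"
    by (rule prod_sum_L[OF fin])
  also have "\<dots> = 1" by (simp add: mu1_def)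
  finally show ?thesis .
qed

lemma Mu_pos: "0 < Mu Z u"
  unfolding Mu_def mu1_def by (intro prod_pos) auto

lemma K_formula:
  assumes "finite Z"
  shows "(\<Sum>u\<in>L Z. Psi Z u v * Psi Z u v' / Mu Z u) = (\<Prod>i\<in>Z. ka (v i) (v' i))"
proof -
  have "(\<Sum>u\<in>L Z. Psi Z u v * Psi Z u v' / Mu Z u) = (\<Sum>u\<in>L Z. \<Prod>i\<in>Z. ps (u i) (v i) * ps (u i) (v' i) / mu1 (u i))"
    unfolding Psi_def Mu_def by (simp add: prod.distrib prod_dividef)
  also have "\<dots> = (\<Prod>i\<in>Z. ka (v i) (v' i))"
    by (subst prod_sum_L[OF assms]) (simp add: ka_def add.commute)
  finally show ?thesis .
qed

lemma ka_abs_sum: "(\<Sum>v\<in>L Z. \<Sum>v'\<in>L Z. \<bar>\<Prod>i\<in>Z. ka (v i) (v' i)\<bar>) = (2/3) ^ card Z" if fin: "finite Z"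
proof -
  have "(\<Sum>v\<in>L Z. \<Sum>v'\<in>L Z. \<bar>\<Prod>i\<in>Z. ka (v i) (v' i)\<bar>) = (\<Sum>v\<in>L Z. \<Sum>v'\<in>L Z. \<Prod>i\<in>Z. (\<lambda>a b. \<bar>ka a b\<bar>) (v i) (v' i))"
    unfolding abs_prod ..
  also have "\<dots> = (\<bar>ka False False\<bar> + \<bar>ka False True\<bar> + \<bar>ka True False\<bar> + \<bar>ka True True\<bar>) ^ card Z"
    by (rule prod_sum_L2[OF fin])
  also have "\<dots> = (2/3) ^ card Z" by (simp add: ka_def ps_def mu1_def)
  finally show ?thesis .
qed

lemma amgm: "0 < (t::real) \<Longrightarrow> 2 * (\<bar>x\<bar> * \<bar>y\<bar>) \<le> t * x\<^sup>2 + y\<^sup>2 / t"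
proof -
  assume t: "0 < t"
  have "0 \<le> (t * \<bar>x\<bar> - \<bar>y\<bar>)\<^sup>2 / t" using t by simp
  also have "(t * \<bar>x\<bar> - \<bar>y\<bar>)\<^sup>2 / t = t * x\<^sup>2 + y\<^sup>2 / t - 2 * (\<bar>x\<bar> * \<bar>y\<bar>)"
    using t by (simp add: power2_eq_square field_simps)
  finally show ?thesis by simp
qed


lemma disc:
  fixes a b :: "cfg \<Rightarrow> real"
  assumes fin: "finite Z" and a: "\<forall>u. \<bar>a u\<bar> \<le> 1" and b: "\<forall>v. \<bar>b v\<bar> \<le> 1"
  shows "\<bar>\<Sum>u\<in>L Z. \<Sum>v\<in>L Z. Psi Z u v * a u * b v\<bar> \<le> sqrt ((2/3) ^ card Z)"
proof -
  define \<epsilon> where "\<epsilon> = sqrt ((2/3::real) ^ card Z)"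
  have ep: "0 < \<epsilon>" unfolding \<epsilon>_def by simp
  have ep2: "\<epsilon>\<^sup>2 = (2/3) ^ card Z" unfolding \<epsilon>_def by simp
  define T where "T u = (\<Sum>v\<in>L Z. Psi Z u v * b v)" for u
  have 1: "(\<Sum>u\<in>L Z. \<Sum>v\<in>L Z. Psi Z u v * a u * b v) = (\<Sum>u\<in>L Z. a u * T u)"
    unfolding T_def by (simp add: sum_distrib_left mult_ac)
  have "(\<Sum>u\<in>L Z. (T u)\<^sup>2 / Mu Z u) = (\<Sum>u\<in>L Z. \<Sum>v\<in>L Z. \<Sum>v'\<in>L Z. (b v * b v') * (Psi Z u v * Psi Z u v' / Mu Z u))"
  proof (rule sum.cong[OF refl])
    fix u
    have "(T u)\<^sup>2 / Mu Z u = (\<Sum>v\<in>L Z. \<Sum>v'\<in>L Z. (Psi Z u v * b v) * (Psi Z u v' * b v')) / Mu Z u"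
      unfolding T_def power2_eq_square sum_product ..
    also have "\<dots> = (\<Sum>v\<in>L Z. \<Sum>v'\<in>L Z. (b v * b v') * (Psi Z u v * Psi Z u v' / Mu Z u))"
      unfolding sum_divide_distrib by (intro sum.cong refl) (simp add: mult_ac)
    finally show "(T u)\<^sup>2 / Mu Z u = (\<Sum>v\<in>L Z. \<Sum>v'\<in>L Z. (b v * b v') * (Psi Z u v * Psi Z u v' / Mu Z u))" .
  qed
  also have "\<dots> = (\<Sum>v\<in>L Z. \<Sum>u\<in>L Z. \<Sum>v'\<in>L Z. (b v * b v') * (Psi Z u v * Psi Z u v' / Mu Z u))"
    by (rule sum.swap)
  also have "\<dots> = (\<Sum>v\<in>L Z. \<Sum>v'\<in>L Z. \<Sum>u\<in>L Z. (b v * b v') * (Psi Z u v * Psi Z u v' / Mu Z u))"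
    by (rule sum.cong[OF refl], rule sum.swap)
  also have "\<dots> = (\<Sum>v\<in>L Z. \<Sum>v'\<in>L Z. (b v * b v') * (\<Prod>i\<in>Z. ka (v i) (v' i)))"
    by (simp only: sum_distrib_left[symmetric] K_formula[OF fin])
  also have "\<dots> \<le> (\<Sum>v\<in>L Z. \<Sum>v'\<in>L Z. \<bar>\<Prod>i\<in>Z. ka (v i) (v' i)\<bar>)"
  proof (intro sum_mono)
    fix v v'
    have "\<bar>b v * b v'\<bar> \<le> 1" using b by (simp add: abs_mult mult_le_one)
    have "(b v * b v') * (\<Prod>i\<in>Z. ka (v i) (v' i)) \<le> \<bar>(b v * b v') * (\<Prod>i\<in>Z. ka (v i) (v' i))\<bar>"
      by (rule abs_ge_self)
    also have "\<dots> = \<bar>b v * b v'\<bar> * \<bar>\<Prod>i\<in>Z. ka (v i) (v' i)\<bar>" by (rule abs_mult)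
    also have "\<dots> \<le> 1 * \<bar>\<Prod>i\<in>Z. ka (v i) (v' i)\<bar>"
      by (rule mult_right_mono[OF \<open>\<bar>b v * b v'\<bar> \<le> 1\<close> abs_ge_zero])
    finally show "(b v * b v') * (\<Prod>i\<in>Z. ka (v i) (v' i)) \<le> \<bar>\<Prod>i\<in>Z. ka (v i) (v' i)\<bar>" by simp
  qed
  also have "\<dots> = \<epsilon>\<^sup>2" using ka_abs_sum[OF fin] ep2 by simp
  finally have Q: "(\<Sum>u\<in>L Z. (T u)\<^sup>2 / Mu Z u) \<le> \<epsilon>\<^sup>2" .
  have "\<bar>\<Sum>u\<in>L Z. a u * T u\<bar> \<le> (\<Sum>u\<in>L Z. \<bar>a u\<bar> * \<bar>T u\<bar>)"
    by (rule order_trans[OF sum_abs]) (simp add: abs_mult)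
  also have "\<dots> \<le> (\<Sum>u\<in>L Z. (\<epsilon> * Mu Z u + (T u)\<^sup>2 / (\<epsilon> * Mu Z u)) / 2)"
  proof (rule sum_mono)
    fix u
    have t: "0 < \<epsilon> * Mu Z u" using ep Mu_pos by simp
    have "2 * (\<bar>a u\<bar> * \<bar>T u\<bar>) \<le> (\<epsilon> * Mu Z u) * (a u)\<^sup>2 + (T u)\<^sup>2 / (\<epsilon> * Mu Z u)"
      by (rule amgm[OF t])
    moreover have "(\<epsilon> * Mu Z u) * (a u)\<^sup>2 \<le> (\<epsilon> * Mu Z u) * 1"
      using t a abs_le_square_iff[of "a u" 1] by (intro mult_left_mono) auto
    ultimately show "\<bar>a u\<bar> * \<bar>T u\<bar> \<le> (\<epsilon> * Mu Z u + (T u)\<^sup>2 / (\<epsilon> * Mu Z u)) / 2" by simp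
  qed
  also have "\<dots> = (\<epsilon> * (\<Sum>u\<in>L Z. Mu Z u) + (\<Sum>u\<in>L Z. (T u)\<^sup>2 / Mu Z u) / \<epsilon>) / 2"
  proof -
    have "(\<Sum>u\<in>L Z. (\<epsilon> * Mu Z u + (T u)\<^sup>2 / (\<epsilon> * Mu Z u)) / 2)
        = (\<Sum>u\<in>L Z. \<epsilon> * Mu Z u + ((T u)\<^sup>2 / Mu Z u) / \<epsilon>) / 2"
      unfolding sum_divide_distrib[symmetric]
      by (intro arg_cong2[where f="(/)"] sum.cong refl) (simp add: divide_divide_eq_left mult.commute)
    also have "\<dots> = (\<epsilon> * (\<Sum>u\<in>L Z. Mu Z u) + (\<Sum>u\<in>L Z. (T u)\<^sup>2 / Mu Z u) / \<epsilon>) / 2"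
      by (simp only: sum.distrib sum_distrib_left sum_divide_distrib)
    finally show ?thesis .
  qed
  also have "\<dots> \<le> (\<epsilon> + \<epsilon>\<^sup>2 / \<epsilon>) / 2"
    using Q ep by (simp add: Mu_sum[OF fin] divide_right_mono)
  also have "\<dots> = \<epsilon>" using ep by (simp add: power2_eq_square)
  finally show ?thesis unfolding 1 \<epsilon>_def .
qed

lemma dec_disc:
  assumes "dec W H" "finite Z"
  shows "\<bar>\<Sum>u\<in>L Z. \<Sum>v\<in>L Z. Psi Z u v * H (join r u) (join r v)\<bar> \<le> W * sqrt ((2/3) ^ card Z)"
  using assms
proof (induction rule: dec.induct)
  case (rank1 a b)
  have "\<bar>\<Sum>u\<in>L Z. \<Sum>v\<in>L Z. Psi Z u v * a (join r u) * b (join r v)\<bar> \<le> sqrt ((2/3) ^ card Z)"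
    using rank1 by (intro disc) auto
  then show ?case by (simp add: mult.assoc)
next
  case (scale W H c)
  have "(\<Sum>u\<in>L Z. \<Sum>v\<in>L Z. Psi Z u v * (c * H (join r u) (join r v))) = c * (\<Sum>u\<in>L Z. \<Sum>v\<in>L Z. Psi Z u v * H (join r u) (join r v))"
    by (simp add: sum_distrib_left mult_ac)
  then show ?case using scale by (simp add: abs_mult mult.assoc mult_left_mono)
next
  case (add W1 H1 W2 H2)
  have "(\<Sum>u\<in>L Z. \<Sum>v\<in>L Z. Psi Z u v * (H1 (join r u) (join r v) + H2 (join r u) (join r v))) =
     (\<Sum>u\<in>L Z. \<Sum>v\<in>L Z. Psi Z u v * H1 (join r u) (join r v)) + (\<Sum>u\<in>L Z. \<Sum>v\<in>L Z. Psi Z u v * H2 (join r u) (join r v))"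
    by (simp add: distrib_left sum.distrib)
  then show ?case using add by (simp add: distrib_right)
next
  case zero then show ?case by simp
next
  case (mono W H W')
  have "W * sqrt ((2/3) ^ card Z) \<le> W' * sqrt ((2/3) ^ card Z)"
    using mono(2) by (intro mult_right_mono) auto
  then show ?case using mono(3)[OF mono(4)] by linarith
qed


definition Idm :: "cfg \<Rightarrow> cfg \<Rightarrow> complex" where "Idm c c' = (if c = c' then 1 else 0)"

lemma Idm_unitary: "finite S \<Longrightarrow> unitary_on S Idm"
  unfolding unitary_on_def Idm_def
  by (auto simp: if_distrib[of cnj] if_distrib[of "\<lambda>z. z * _"] L_finite cong: if_cong)

definition vanish :: "nat \<Rightarrow> (cfg \<Rightarrow> complex) \<Rightarrow> bool" where
  "vanish m v \<longleftrightarrow> (\<forall>s. s \<notin> cube m \<longrightarrow> v s = 0)"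

lemma apply_local_Id:
  assumes "S \<subseteq> {..<m}" "vanish m v"
  shows "apply_local m S Idm v = v"
proof
  fix s
  show "apply_local m S Idm v s = v s"
  proof (cases "s \<in> cube m")
    case True
    have "apply_local m S Idm v s = (\<Sum>c\<in>L S. Idm (restr S s) c * v (\<lambda>i. if i \<in> S then c i else s i))"
      by (rule apply_local_eq[OF assms(1) True])
    also have "\<dots> = (\<Sum>c\<in>L S. if c = restr S s then v (\<lambda>i. if i \<in> S then c i else s i) else 0)"
      unfolding Idm_def by (intro sum.cong refl) auto
    also have "\<dots> = v (\<lambda>i. if i \<in> S then restr S s i else s i)"
      using assms(1) by (simp add: sum.delta' L_finite finite_subset restr_L)
    also have "(\<lambda>i. if i \<in> S then restr S s i else s i) = s" unfolding restr_def by auto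
    finally show ?thesis .
  next
    case False
    then obtain i where i: "m \<le> i" "s i" unfolding cube_def by auto
    then have "i \<notin> S" using assms(1) by auto
    then have E: "{t\<in>cube m. \<forall>i. i \<notin> S \<longrightarrow> t i = s i} = {}" using i unfolding cube_def by auto
    show ?thesis using False assms(2) unfolding apply_local_def E vanish_def by simp
  qed
qed

lemma id_rounds:
  assumes "\<forall>q\<in>set qs. q < m \<and> own q" "distinct qs" "vanish m v"
  shows "valid_rounds m (map (\<lambda>q. (True, Idm, q)) qs) own
       \<and> fst (run m (map (\<lambda>q. (True, Idm, q)) qs) own v) = (\<lambda>i. if i \<in> set qs then False else own i)
       \<and> snd (run m (map (\<lambda>q. (True, Idm, q)) qs) own v) = v"
  using assms
proof (induction qs arbitrary: own)
  case Nil then show ?case by simp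
next
  case (Cons q qs)
  have q: "q < m" "own q" using Cons.prems by auto
  have fin: "finite (owned m own True)" by (rule owned_finite)
  have ih: "valid_rounds m (map (\<lambda>q. (True, Idm, q)) qs) (own(q := False))
       \<and> fst (run m (map (\<lambda>q. (True, Idm, q)) qs) (own(q := False)) v) = (\<lambda>i. if i \<in> set qs then False else (own(q := False)) i)
       \<and> snd (run m (map (\<lambda>q. (True, Idm, q)) qs) (own(q := False)) v) = v"
    using Cons.prems by (intro Cons.IH) auto
  have al: "apply_local m (owned m own True) Idm v = v"
    using Cons.prems(3) by (intro apply_local_Id) (auto simp: owned_def)
  have e: "(\<lambda>i. if i \<in> set qs then False else (own(q := False)) i) = (\<lambda>i. if i \<in> set (q#qs) then False else own i)"
    by (auto simp: fun_eq_iff)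
  show ?case using ih q Idm_unitary[OF fin] al e by simp
qed

definition xpart :: "nat \<Rightarrow> cfg \<Rightarrow> cfg" where "xpart n c = (\<lambda>i. if i < n then c i else False)"
definition ypart :: "nat \<Rightarrow> cfg \<Rightarrow> cfg" where "ypart n c = (\<lambda>i. if i < n then c (i + n) else False)"
definition flip :: "nat \<Rightarrow> (cfg \<Rightarrow> cfg \<Rightarrow> bool) \<Rightarrow> cfg \<Rightarrow> cfg" where
  "flip n f c = c(2*n := (c (2*n) \<noteq> f (xpart n c) (ypart n c)))"
definition Ufl :: "nat \<Rightarrow> (cfg \<Rightarrow> cfg \<Rightarrow> bool) \<Rightarrow> cfg \<Rightarrow> cfg \<Rightarrow> complex" where
  "Ufl n f c c' = (if c = flip n f c' then 1 else 0)"

lemma flip_flip: "flip n f (flip n f c) = c"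
proof -
  have hx: "xpart n (flip n f c) = xpart n c" and hy: "ypart n (flip n f c) = ypart n c"
    unfolding xpart_def ypart_def flip_def by (auto simp: fun_eq_iff)
  have "flip n f (flip n f c) = (flip n f c)(2*n := (flip n f c (2*n) \<noteq> f (xpart n c) (ypart n c)))"
    unfolding flip_def[of n f "flip n f c"] hx hy ..
  then show ?thesis by (auto simp: flip_def fun_eq_iff)
qed

lemma flip_L: "c \<in> L {..<Suc (2*n)} \<Longrightarrow> flip n f c \<in> L {..<Suc (2*n)}"
  unfolding flip_def L_mem by auto

lemma Ufl_unitary: "unitary_on {..<Suc (2*n)} (Ufl n f)"
  unfolding unitary_on_def
proof (intro ballI)
  fix a b assume a: "a \<in> L {..<Suc (2*n)}" and b: "b \<in> L {..<Suc (2*n)}"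
  have "(\<Sum>c\<in>L {..<Suc (2*n)}. cnj (Ufl n f c a) * Ufl n f c b) =
        (\<Sum>c\<in>L {..<Suc (2*n)}. if c = flip n f a then (if flip n f a = flip n f b then 1 else 0) else 0)"
    unfolding Ufl_def by (intro sum.cong refl) auto
  also have "\<dots> = (if flip n f a = flip n f b then 1 else 0)"
    using flip_L[OF a] by (simp add: sum.delta' L_finite)
  also have "\<dots> = (if a = b then 1 else 0)" by (metis flip_flip)
  finally show "(\<Sum>c\<in>L {..<Suc (2*n)}. cnj (Ufl n f c a) * Ufl n f c b) = (if a = b then 1 else 0)" .
qed

definition proto :: "nat \<Rightarrow> (cfg \<Rightarrow> cfg \<Rightarrow> bool) \<Rightarrow> protocol" where
  "proto n f = \<lparr> nqubits = Suc (2*n), owner0 = (\<lambda>i. i < n), rounds = map (\<lambda>q. (True, Idm, q)) [0..<n],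
     fin_player = False, fin_unitary = Ufl n f, out_qubit = 2*n \<rparr>"

lemma proto_run:
  "valid_rounds (Suc (2*n)) (rounds (proto n f)) (\<lambda>i. i < n)
   \<and> fst (run (Suc (2*n)) (rounds (proto n f)) (\<lambda>i. i < n) v) = (\<lambda>i. False)
   \<and> (vanish (Suc (2*n)) v \<longrightarrow> snd (run (Suc (2*n)) (rounds (proto n f)) (\<lambda>i. i < n) v) = v)"
proof -
  have a: "\<forall>q\<in>set [0..<n]. q < Suc (2*n) \<and> q < n" by auto
  have "fst (run (Suc (2*n)) (rounds (proto n f)) (\<lambda>i. i < n) v) = fst (run (Suc (2*n)) (rounds (proto n f)) (\<lambda>i. i < n) (\<lambda>_. 0))"
    by (rule run_fst)
  moreover have "vanish (Suc (2*n)) (\<lambda>_. 0)" unfolding vanish_def by simp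
  ultimately show ?thesis using id_rounds[OF a] unfolding proto_def by (auto simp: fun_eq_iff)
qed

lemma proto_valid: "valid_protocol n (proto n f)"
proof -
  have o: "owned (Suc (2*n)) (\<lambda>i. False) False = {..<Suc (2*n)}" unfolding owned_def by auto
  show ?thesis unfolding valid_protocol_def Let_def
    using proto_run[of n f "\<lambda>_. 0"] Ufl_unitary[of n f] o by (simp add: proto_def)
qed

lemma proto_accept:
  assumes x: "x \<in> cube n" and y: "y \<in> cube n"
  shows "accept_prob n (proto n f) x y = (if f x y then 1 else 0)"
proof -
  let ?m = "Suc (2*n)"
  let ?i = "init_basis n x y"
  have ic: "?i \<in> cube ?m" by (rule init_cube) simp
  have van: "vanish ?m (initv n x y)" unfolding vanish_def using ic by auto
  have o: "owned ?m (\<lambda>i. False) False = {..<?m}" unfolding owned_def by auto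
  have fs: "final_state n (proto n f) x y = apply_local ?m {..<?m} (Ufl n f) (initv n x y)"
    unfolding final_state_eq using proto_run[of n f] van o by (simp add: proto_def)
  have fs2: "final_state n (proto n f) x y s = (if s = flip n f ?i then 1 else 0)" if s: "s \<in> cube ?m" for s
  proof -
    have "apply_local ?m {..<?m} (Ufl n f) (initv n x y) s =
        (\<Sum>c\<in>L {..<?m}. Ufl n f (restr {..<?m} s) c * initv n x y (\<lambda>i. if i \<in> {..<?m} then c i else s i))"
      by (rule apply_local_eq[OF _ s]) simp
    also have "\<dots> = (\<Sum>c\<in>L {..<?m}. if c = ?i then Ufl n f s c else 0)"
    proof (intro sum.cong refl)
      fix c assume c: "c \<in> L {..<?m}"
      have "(\<lambda>i. if i \<in> {..<?m} then c i else s i) = c"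
        using c s unfolding L_mem cube_def by (auto simp: fun_eq_iff)
      moreover have "restr {..<?m} s = s" using s by (simp add: restr_id cube_L)
      ultimately show "Ufl n f (restr {..<?m} s) c * initv n x y (\<lambda>i. if i \<in> {..<?m} then c i else s i) =
          (if c = ?i then Ufl n f s c else 0)" by simp
    qed
    also have "\<dots> = Ufl n f s ?i" using ic by (simp add: sum.delta' L_finite cube_L)
    finally show ?thesis unfolding fs Ufl_def by simp
  qed
  have fi: "flip n f ?i \<in> cube ?m" using flip_L[of ?i n f] ic by (simp add: cube_L)
  have xp: "xpart n ?i = x" using x unfolding xpart_def init_basis_def cube_def by (auto simp: fun_eq_iff)
  have yp: "ypart n ?i = y" using y unfolding ypart_def init_basis_def cube_def by (auto simp: fun_eq_iff)
  have bit: "flip n f ?i (2*n) = f x y"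
    unfolding flip_def xp yp by (simp add: init_basis_def)
  have "accept_prob n (proto n f) x y = (\<Sum>s\<in>{s\<in>cube ?m. s (2*n)}. (cmod (if s = flip n f ?i then 1 else 0))\<^sup>2)"
  proof -
    have e: "nqubits (proto n f) = ?m" "out_qubit (proto n f) = 2*n" by (simp_all add: proto_def)
    show ?thesis unfolding accept_prob_def e by (intro sum.cong refl) (simp add: fs2)
  qed
  also have "\<dots> = (\<Sum>s\<in>{s\<in>cube ?m. s (2*n)}. if s = flip n f ?i then 1 else 0)"
    by (intro sum.cong refl) auto
  also have "\<dots> = (if f x y then 1 else 0)"
    using fi bit by (simp add: sum.delta' cube_L L_finite)
  finally show ?thesis .
qed

lemma proto_computes: "computes n f (proto n f)"
  unfolding computes_def by (simp add: proto_accept)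

lemma BQC_spec:
  "\<exists>P. valid_protocol n P \<and> computes n f P \<and> length (rounds P) = BQC n f"
proof -
  have "\<exists>P. valid_protocol n P \<and> computes n f P \<and> length (rounds P) = length (rounds (proto n f))"
    using proto_valid proto_computes by blast
  then show ?thesis unfolding BQC_def by (rule LeastI)
qed


lemma card_L: assumes "finite S" shows "card (L S) = 2 ^ card S"
proof -
  have "bij_betw (\<lambda>A i. i \<in> A) (Pow S) (L S)"
  proof (rule bij_betw_byWitness[where f' = "\<lambda>a. {i. a i}"])
    show "\<forall>a\<in>Pow S. {i. (\<lambda>i. i \<in> a) i} = a" by auto
    show "\<forall>a'\<in>L S. (\<lambda>i. i \<in> {i. a' i}) = a'" by auto
    show "(\<lambda>A i. i \<in> A) ` Pow S \<subseteq> L S" by (auto simp: L_mem)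
    show "(\<lambda>a. {i. a i}) ` L S \<subseteq> Pow S" by (auto simp: L_mem)
  qed
  then have "card (L S) = card (Pow S)" by (metis bij_betw_same_card)
  then show ?thesis using assms by (simp add: card_Pow)
qed

lemma sum_sg_zero:
  assumes "finite Z" "Z \<noteq> {}"
  shows "(\<Sum>w\<in>L Z. sg Z w) = 0"
proof -
  obtain j where jZ: "j \<in> Z" using assms(2) by blast
  define Z' where "Z' = Z - {j}"
  have Z: "Z = insert j Z'" "j \<notin> Z'" unfolding Z'_def using jZ by auto
  have f: "finite Z'" using assms(1) Z by simp
  have "(\<Sum>w\<in>L Z. sg Z w) = (\<Sum>w\<in>L Z'. sg (insert j Z') w + sg (insert j Z') (w(j:=True)))"
    unfolding Z by (rule L_insert_sum[OF Z(2) f])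
  also have "\<dots> = (\<Sum>w\<in>L Z'. 0)"
    by (intro sum.cong refl) (simp add: sg_insert1[OF f Z(2)] sg_insert2[OF f Z(2)])
  finally show ?thesis by simp
qed

lemma join_band: "band (join r u) (join r v) = join r (\<lambda>i. u i \<and> v i)"
  unfolding band_def join_def by auto

lemma accept_dec:
  assumes "valid_protocol n P"
  shows "dec (2 * 4 ^ length (rounds P)) (\<lambda>x y. accept_prob n P x y)"
proof -
  obtain a b where ab: "\<forall>x y. accept_prob n P x y = Re (\<Sum>w<(2::nat) ^ length (rounds P). \<Sum>w'<(2::nat) ^ length (rounds P). a x w w' * b y w w')"
     "\<forall>x w w'. cmod (a x w w') \<le> 1" "\<forall>y w w'. cmod (b y w w') \<le> 1"
    using protocol_rep[OF assms] by blast
  have d: "dec (2 * real ((2::nat) ^ length (rounds P)) * real ((2::nat) ^ length (rounds P)))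
      (\<lambda>x y. Re (\<Sum>w<(2::nat) ^ length (rounds P). \<Sum>w'<(2::nat) ^ length (rounds P). a x w w' * b y w w'))"
    by (rule dec_Re_sum[OF ab(2,3)])
  have eW: "2 * real ((2::nat) ^ length (rounds P)) * real ((2::nat) ^ length (rounds P)) = 2 * 4 ^ length (rounds P)"
    by (simp add: power_mult_distrib[symmetric])
  have eH: "(\<lambda>x y. accept_prob n P x y) = (\<lambda>x y. Re (\<Sum>w<(2::nat) ^ length (rounds P). \<Sum>w'<(2::nat) ^ length (rounds P). a x w w' * b y w w'))"
    using ab(1) by (intro ext) blast
  show ?thesis using d unfolding eW eH .
qed

lemma fourier_split:
  fixes n :: nat and g :: "cfg \<Rightarrow> bool" and z :: cfg
  defines "Z \<equiv> {i. i < n \<and> z i}"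
  defines "R \<equiv> {..<n} - Z"
  shows "fourier n g z = (1 / 2 ^ n) * (\<Sum>r\<in>L R. \<Sum>w\<in>L Z. (if g (join r w) then 1 else 0) * sg Z w)"
proof -
  have RZ: "R \<inter> Z = {}" "R \<union> Z = {..<n}" "finite R" "finite Z" unfolding R_def Z_def by auto
  have "(\<Sum>a\<in>cube n. (if g a then 1 else 0) * (-1) ^ card {i. i < n \<and> a i \<and> z i}) =
      (\<Sum>r\<in>L R. \<Sum>w\<in>L Z. (if g (join r w) then 1 else 0) * (-1::real) ^ card {i. i < n \<and> join r w i \<and> z i})"
    by (rule sum_cube_split[OF RZ(1,2)])
  also have "\<dots> = (\<Sum>r\<in>L R. \<Sum>w\<in>L Z. (if g (join r w) then 1 else 0) * sg Z w)"
  proof (intro sum.cong refl)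
    fix r w assume r: "r \<in> L R" and w: "w \<in> L Z"
    have "{i. i < n \<and> join r w i \<and> z i} = {i\<in>Z. w i}"
      using r w unfolding join_def L_mem R_def Z_def by auto
    then show "(if g (join r w) then 1 else 0) * (-1::real) ^ card {i. i < n \<and> join r w i \<and> z i} =
        (if g (join r w) then 1 else 0) * sg Z w" unfolding sg_def by simp
  qed
  finally show ?thesis unfolding fourier_def by simp
qed

lemma fourier_le1: "\<bar>fourier n g z\<bar> \<le> 1"
proof -
  have "\<bar>\<Sum>a\<in>cube n. (if g a then 1 else 0) * (-1::real) ^ card {i. i < n \<and> a i \<and> z i}\<bar> \<le> (\<Sum>a\<in>cube n. 1)"
    by (rule order_trans[OF sum_abs], rule sum_mono) (simp add: abs_mult)
  also have "\<dots> = 2 ^ n" by (simp add: cube_L card_L)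
  finally show ?thesis unfolding fourier_def by (simp add: abs_mult divide_le_eq)
qed


lemma eta_bound:
  fixes \<gamma> :: real
  assumes g: "0 < \<gamma>" "\<gamma> \<le> 1"
  shows "(8/9::real) ^ (nat \<lceil>6 * (1 - log 2 \<gamma>)\<rceil>) \<le> \<gamma> / 2"
proof -
  define D where "D = 1 - log 2 \<gamma>"
  have D1: "1 \<le> D" unfolding D_def using g by simp
  define e where "e = nat \<lceil>6 * D\<rceil>"
  have e: "6 * D \<le> real e" unfolding e_def by linarith
  have "(8/9::real) ^ e = (8/9) powr (real e)" by (simp add: powr_realpow)
  also have "\<dots> \<le> (8/9) powr (6 * D)" by (rule powr_mono'[OF e]) auto
  also have "\<dots> = ((8/9) powr 6) powr D" by (rule powr_powr[symmetric])
  also have "\<dots> \<le> (1/2) powr D"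
  proof (rule powr_mono2)
    show "0 \<le> D" using D1 by simp
    show "0 \<le> (8/9::real) powr 6" by simp
    have "(8/9::real) powr 6 = (8/9) ^ 6" by (subst powr_realpow[symmetric]) auto
    then show "(8/9::real) powr 6 \<le> 1/2" by (simp add: field_simps)
  qed
  also have "\<dots> = 2 powr (- D)" by (simp add: powr_minus_divide powr_divide)
  also have "\<dots> = 2 powr (log 2 \<gamma> - 1)" unfolding D_def by simp
  also have "\<dots> = \<gamma> / 2" using g by (simp add: powr_diff)
  finally show ?thesis unfolding e_def D_def .
qed

lemma eps_bound: "sqrt ((2/3::real) ^ k) \<le> 2 powr (- (real k / 2) / 2)"
proof -
  have "(2/3::real) ^ k = (2/3) powr (real k)" by (simp add: powr_realpow)
  also have "\<dots> = ((2/3) powr 2) powr (real k / 2)" by (simp only: powr_powr) simp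
  also have "\<dots> \<le> (1/2) powr (real k / 2)"
  proof (rule powr_mono2)
    have "(2/3::real) powr 2 = (2/3) ^ 2" by (subst powr_realpow[symmetric]) auto
    then show "(2/3::real) powr 2 \<le> 1/2" by (simp add: field_simps power2_eq_square)
  qed auto
  also have "\<dots> = 2 powr (- (real k / 2))" by (simp add: powr_minus_divide powr_divide)
  finally have "sqrt ((2/3::real) ^ k) \<le> sqrt (2 powr (- (real k / 2)))" by (rule real_sqrt_le_mono)
  also have "\<dots> = 2 powr (- (real k / 2) / 2)" by (rule powr_half_sqrt_powr[symmetric]) simp
  finally show ?thesis .
qed

lemma WH_bound:
  "(4::real) ^ e * (1 + 2 * 4 ^ c) ^ (2*e) \<le> 2 powr (real (e * (4*c + 6)))"
proof -
  have "(1::real) + 2 * 4 ^ c \<le> 4 ^ (c + 1)"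
  proof -
    have a: "(1::real) \<le> 4 ^ c" by simp
    have "(4::real) ^ (c + 1) = 4 * 4 ^ c" by simp
    then show ?thesis using a by linarith
  qed
  then have "(1 + 2 * 4 ^ c) ^ (2*e) \<le> ((4::real) ^ (c + 1)) ^ (2*e)" by (intro power_mono) auto
  then have "(4::real) ^ e * (1 + 2 * 4 ^ c) ^ (2*e) \<le> 4 ^ e * ((4::real) ^ (c + 1)) ^ (2*e)"
    by (intro mult_left_mono) auto
  also have "\<dots> = (2::real) ^ (e * (4*c + 6))"
  proof -
    have "(4::real) ^ e * ((4::real) ^ (c + 1)) ^ (2*e) = 4 ^ (e + (c + 1) * (2 * e))"
      by (simp only: power_add power_mult)
    also have "\<dots> = (2::real) ^ (2 * (e + (c + 1) * (2 * e)))" unfolding power_mult by simp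
    also have "2 * (e + (c + 1) * (2 * e)) = e * (4*c + 6)" by (simp add: algebra_simps)
    finally show ?thesis .
  qed
  also have "\<dots> = 2 powr (real (e * (4*c + 6)))" by (rule powr_realpow[symmetric]) simp
  finally show ?thesis .
qed

lemma final_arith:
  fixes \<gamma> :: real and c k :: nat
  assumes g: "0 < \<gamma>" "\<gamma> \<le> 1" and c: "1 \<le> c"
    and main: "\<gamma> / 2 \<le> 4 ^ (nat \<lceil>6 * (1 - log 2 \<gamma>)\<rceil>) * (1 + 2 * 4 ^ c) ^ (2 * nat \<lceil>6 * (1 - log 2 \<gamma>)\<rceil>) * sqrt ((2/3) ^ k)"
  shows "real k \<le> 300 * real c * (1 - log 2 \<gamma>)"
proof -
  define D where "D = 1 - log 2 \<gamma>"
  have D1: "1 \<le> D" unfolding D_def using g by simp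
  define e where "e = nat \<lceil>6 * D\<rceil>"
  have e: "real e \<le> 7 * D" unfolding e_def using D1 by linarith
  have "\<gamma> / 2 \<le> 2 powr (real (e * (4*c + 6))) * 2 powr (- (real k / 2) / 2)"
    using main unfolding D_def[symmetric] e_def[symmetric]
    by (rule order_trans) (intro mult_mono WH_bound eps_bound, auto)
  also have "\<dots> = 2 powr (real (e * (4*c + 6)) - real k / 4)" by (simp add: powr_add[symmetric])
  finally have "2 powr (log 2 \<gamma> - 1) \<le> 2 powr (real (e * (4*c + 6)) - real k / 4)"
    using g by (simp add: powr_diff)
  then have "log 2 \<gamma> - 1 \<le> real (e * (4*c + 6)) - real k / 4" by simp
  then have k1: "real k \<le> 4 * (real e * (4 * real c + 6)) + 4 * D" unfolding D_def by simp
  have "real e * (4 * real c + 6) \<le> 7 * D * (4 * real c + 6)" using e by (intro mult_right_mono) auto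
  then have "real k \<le> D * (112 * real c + 172)" using k1 by (simp add: algebra_simps)
  also have "\<dots> \<le> D * (300 * real c)" using D1 c by (intro mult_left_mono) auto
  finally show ?thesis unfolding D_def by (simp add: mult_ac)
qed


lemma core:
  fixes n :: nat and f :: "cfg \<Rightarrow> cfg \<Rightarrow> bool" and g :: "cfg \<Rightarrow> bool" and z :: cfg and P :: protocol
  assumes fg: "\<forall>x\<in>cube n. \<forall>y\<in>cube n. f x y = g (band x y)"
    and z: "z \<in> cube n" and nz: "fourier n g z \<noteq> 0"
    and vp: "valid_protocol n P" and cp: "computes n f P"
  shows "real (hw n z) \<le> 300 * real (length (rounds P)) * (1 - log 2 \<bar>fourier n g z\<bar>)"
proof -
  define \<gamma> where "\<gamma> = \<bar>fourier n g z\<bar>"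
  have g0: "0 < \<gamma>" "\<gamma> \<le> 1" unfolding \<gamma>_def using nz fourier_le1 by auto
  have D1: "1 \<le> 1 - log 2 \<gamma>" using g0 by simp
  define Z where "Z = {i. i < n \<and> z i}"
  define R where "R = {..<n} - Z"
  define k where "k = card Z"
  have hw: "hw n z = k" unfolding hw_def k_def Z_def ..
  define c where "c = length (rounds P)"
  define Gf where "Gf a = (if g a then 1 else 0 :: real)" for a
  define S where "S r = (\<Sum>w\<in>L Z. Gf (join r w) * sg Z w)" for r
  define Pa where "Pa x y = accept_prob n P x y" for x y
  have RZ: "R \<inter> Z = {}" "R \<union> Z = {..<n}" "finite R" "finite Z" unfolding R_def Z_def by auto
  have cardR: "card R = n - k" unfolding R_def k_def by (subst card_Diff_subset) (auto simp: Z_def)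
  have kn: "k \<le> n" unfolding k_def Z_def using card_mono[of "{..<n}" "{i. i < n \<and> z i}"] by auto
  have cubeJ: "join r u \<in> cube n" if "r \<in> L R" "u \<in> L Z" for r u
    using join_L[OF that] RZ(2) by (simp add: cube_L)
  have fJ: "f (join r u) (join r v) = g (join r (\<lambda>i. u i \<and> v i))" if "r \<in> L R" "u \<in> L Z" "v \<in> L Z" for r u v
    using fg[rule_format, OF cubeJ[OF that(1,2)] cubeJ[OF that(1,3)]] by (simp add: join_band)
  have Pb: "0 \<le> Pa x y" "Pa x y \<le> 1" for x y unfolding Pa_def using accept_le1[OF vp] by auto
  have comp: "(f x y \<longrightarrow> 2/3 \<le> Pa x y) \<and> (\<not> f x y \<longrightarrow> Pa x y \<le> 1/3)" if "x \<in> cube n" "y \<in> cube n" for x y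
  proof -
    have "if f x y then accept_prob n P x y \<ge> 2/3 else accept_prob n P x y \<le> 1/3"
      using cp that unfolding computes_def by blast
    then show ?thesis unfolding Pa_def by (cases "f x y") auto
  qed
  have feq: "f x y = f x' y'" if "x \<in> cube n" "y \<in> cube n" "x' \<in> cube n" "y' \<in> cube n" "Pa x y = Pa x' y'" for x y x' y'
    using comp[OF that(1,2)] comp[OF that(3,4)] that(5) by (cases "f x y"; cases "f x' y'") auto
  have four: "fourier n g z = (1 / 2 ^ n) * (\<Sum>r\<in>L R. S r)"
    unfolding S_def Gf_def R_def Z_def by (rule fourier_split)
  obtain r where r: "r \<in> L R" and rS: "2 ^ k * \<gamma> \<le> \<bar>S r\<bar>"
  proof (rule ccontr)
    assume "\<not> thesis"
    then have lt: "\<forall>r\<in>L R. \<bar>S r\<bar> < 2 ^ k * \<gamma>" using that by force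
    have ne: "L R \<noteq> {}" using L_mem[of "\<lambda>_. False" R] by auto
    have "2 ^ n * \<gamma> = \<bar>\<Sum>r\<in>L R. S r\<bar>" unfolding \<gamma>_def four by (simp add: abs_mult)
    also have "\<dots> \<le> (\<Sum>r\<in>L R. \<bar>S r\<bar>)" by (rule sum_abs)
    also have "\<dots> < (\<Sum>r\<in>L R. 2 ^ k * \<gamma>)" using lt ne by (intro sum_strict_mono) (auto simp: L_finite RZ)
    also have "\<dots> = 2 ^ (n - k) * 2 ^ k * \<gamma>" by (simp add: card_L RZ cardR)
    also have "\<dots> = 2 ^ n * \<gamma>" using kn by (simp add: power_add[symmetric])
    finally show False by simp
  qed
  have "0 < 2 ^ k * \<gamma>" using g0 by simp
  then have Sr_pos: "0 < \<bar>S r\<bar>" using rS by linarith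
  show ?thesis
  proof (cases "c = 0")
    case True
    have Z0: "Z = {}"
    proof (rule ccontr)
      assume Zne: "Z \<noteq> {}"
      define Zf where "Zf = (\<lambda>i. i \<in> Z)"
      have Zf: "Zf \<in> L Z" unfolding Zf_def L_mem by auto
      have F0: "(\<lambda>_. False) \<in> L Z" unfolding L_mem by auto
      have const: "Gf (join r u) = Gf (join r (\<lambda>_. False))" if u: "u \<in> L Z" for u
      proof -
        have a1: "(\<lambda>i. u i \<and> Zf i) = u" "(\<lambda>i. Zf i \<and> u i) = u" using u unfolding Zf_def L_mem by auto
        have a2: "(\<lambda>i. u i \<and> False) = (\<lambda>_. False)" "(\<lambda>i. False \<and> u i) = (\<lambda>_. False)" by auto
        have "rounds P = []" using True unfolding c_def by simp
        from protocol_zero[OF vp this]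
        have "g (join r u) = g (join r (\<lambda>_. False))"
        proof
          assume A: "\<forall>x y y'. accept_prob n P x y = accept_prob n P x y'"
          have "f (join r u) (join r Zf) = f (join r u) (join r (\<lambda>_. False))"
            using A by (intro feq cubeJ r u Zf F0) (simp add: Pa_def)
          then show ?thesis using fJ[OF r u Zf] fJ[OF r u F0] a1 a2 by simp
        next
          assume B: "\<forall>x x' y. accept_prob n P x y = accept_prob n P x' y"
          have "f (join r Zf) (join r u) = f (join r (\<lambda>_. False)) (join r u)"
            using B by (intro feq cubeJ r u Zf F0) (simp add: Pa_def)
          then show ?thesis using fJ[OF r Zf u] fJ[OF r F0 u] a1 a2 by simp
        qed
        then show ?thesis unfolding Gf_def by simp
      qed
      have "S r = (\<Sum>w\<in>L Z. Gf (join r (\<lambda>_. False)) * sg Z w)"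
        unfolding S_def using const by (intro sum.cong refl) auto
      also have "\<dots> = Gf (join r (\<lambda>_. False)) * (\<Sum>w\<in>L Z. sg Z w)" by (simp add: sum_distrib_left)
      also have "\<dots> = 0" using sum_sg_zero[OF RZ(4) Zne] by simp
      finally show False using Sr_pos by simp
    qed
    have "0 \<le> real (length (rounds P)) * (1 - log 2 \<gamma>)" using D1 by simp
    then show ?thesis using hw k_def Z0 unfolding \<gamma>_def by simp
  next
    case False
    then have c1: "1 \<le> c" by simp
    define D where "D = 1 - log 2 \<gamma>"
    define e where "e = nat \<lceil>6 * D\<rceil>"
    define WH where "WH = (4::real) ^ e * (1 + 2 * 4 ^ c) ^ (2 * e)"
    define \<eta> where "\<eta> = (8/9::real) ^ e"
    define \<epsilon> where "\<epsilon> = sqrt ((2/3::real) ^ card Z)"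
    define H where "H x y = amp e (Pa x y)" for x y
    have dP: "dec (2 * 4 ^ c) Pa" unfolding c_def Pa_def using accept_dec[OF vp] by simp
    have dH: "dec WH H" unfolding WH_def H_def using dec_amp[OF dP] by simp
    have eta: "\<eta> \<le> \<gamma> / 2" unfolding \<eta>_def e_def D_def by (rule eta_bound[OF g0])
    have err: "\<bar>Gf (join r (\<lambda>i. u i \<and> v i)) - H (join r u) (join r v)\<bar> \<le> \<eta>"
      if u: "u \<in> L Z" and v: "v \<in> L Z" for u v
    proof -
      have cx: "join r u \<in> cube n" "join r v \<in> cube n" using cubeJ r u v by auto
      show ?thesis
      proof (cases "g (join r (\<lambda>i. u i \<and> v i))")
        case True
        then have "2/3 \<le> Pa (join r u) (join r v)" using comp[OF cx] fJ[OF r u v] by simp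
        then have "\<bar>amp e (Pa (join r u) (join r v)) - 1\<bar> \<le> \<eta>" unfolding \<eta>_def using amp_err(2) Pb by blast
        then show ?thesis using True unfolding Gf_def H_def by (simp add: abs_minus_commute)
      next
        case False
        then have "Pa (join r u) (join r v) \<le> 1/3" using comp[OF cx] fJ[OF r u v] by simp
        then have "\<bar>amp e (Pa (join r u) (join r v))\<bar> \<le> \<eta>" unfolding \<eta>_def using amp_err(1) Pb by blast
        then show ?thesis using False unfolding Gf_def H_def by simp
      qed
    qed
    define Corr where "Corr = (\<Sum>u\<in>L Z. \<Sum>v\<in>L Z. Psi Z u v * Gf (join r (\<lambda>i. u i \<and> v i)))"
    define Hs where "Hs = (\<Sum>u\<in>L Z. \<Sum>v\<in>L Z. Psi Z u v * H (join r u) (join r v))"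
    have Corr_eq: "Corr = (1/2) ^ k * S r"
      unfolding Corr_def S_def k_def using correlation[OF RZ(4), of "\<lambda>w. Gf (join r w)"] by simp
    have Corr_ge: "\<gamma> \<le> \<bar>Corr\<bar>"
    proof -
      have "\<gamma> = (1/2) ^ k * (2 ^ k * \<gamma>)" by (simp add: power_one_over)
      also have "\<dots> \<le> (1/2) ^ k * \<bar>S r\<bar>" using rS by (intro mult_left_mono) auto
      also have "\<dots> = \<bar>Corr\<bar>" unfolding Corr_eq by (simp add: abs_mult)
      finally show ?thesis .
    qed
    have Hs_le: "\<bar>Hs\<bar> \<le> WH * \<epsilon>" unfolding Hs_def \<epsilon>_def by (rule dec_disc[OF dH RZ(4)])
    have diff: "\<bar>Corr - Hs\<bar> \<le> \<eta>"
    proof -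
      have "Corr - Hs = (\<Sum>u\<in>L Z. \<Sum>v\<in>L Z. Psi Z u v * (Gf (join r (\<lambda>i. u i \<and> v i)) - H (join r u) (join r v)))"
        unfolding Corr_def Hs_def by (simp add: sum_subtractf right_diff_distrib)
      also have "\<bar>\<dots>\<bar> \<le> (\<Sum>u\<in>L Z. \<Sum>v\<in>L Z. \<bar>Psi Z u v * (Gf (join r (\<lambda>i. u i \<and> v i)) - H (join r u) (join r v))\<bar>)"
        by (rule order_trans[OF sum_abs], rule sum_mono, rule sum_abs)
      also have "\<dots> \<le> (\<Sum>u\<in>L Z. \<Sum>v\<in>L Z. \<bar>Psi Z u v\<bar> * \<eta>)"
        using err by (intro sum_mono) (simp add: abs_mult mult_left_mono)
      also have "\<dots> = \<eta>" using abs_Psi_sum[OF RZ(4)] by (simp add: sum_distrib_right[symmetric])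
      finally show ?thesis .
    qed
    have "\<gamma> / 2 \<le> WH * \<epsilon>" using Corr_ge Hs_le diff eta by linarith
    then have "real k \<le> 300 * real c * (1 - log 2 \<gamma>)"
      using final_arith[OF g0 c1, of k] unfolding WH_def e_def D_def \<epsilon>_def k_def by simp
    then show ?thesis unfolding hw c_def \<gamma>_def .
  qed
qed

theorem theorem6p1:
  shows "\<exists>C>0. \<forall>n (f :: cfg \<Rightarrow> cfg \<Rightarrow> bool) (g :: cfg \<Rightarrow> bool) z.
     (\<forall>x\<in>cube n. \<forall>y\<in>cube n. f x y = g (band x y)) \<longrightarrow>
     z \<in> cube n \<longrightarrow> fourier n g z \<noteq> 0 \<longrightarrow>
     real (BQC n f) \<ge> C * real (hw n z) / (1 - log 2 \<bar>fourier n g z\<bar>)"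
proof (intro exI[of _ "1/300"] conjI allI impI)
  show "(0::real) < 1/300" by simp
  fix n f g z
  assume fg: "\<forall>x\<in>cube n. \<forall>y\<in>cube n. f x y = (g :: cfg \<Rightarrow> bool) (band x y)"
    and z: "z \<in> cube n" and nz: "fourier n g z \<noteq> 0"
  obtain P where P: "valid_protocol n P" "computes n f P" "length (rounds P) = BQC n f"
    using BQC_spec by blast
  have k: "real (hw n z) \<le> 300 * real (BQC n f) * (1 - log 2 \<bar>fourier n g z\<bar>)"
    using core[OF fg z nz P(1,2)] P(3) by simp
  have D: "0 < 1 - log 2 \<bar>fourier n g z\<bar>" using nz fourier_le1[of n g z] by simp
  show "1/300 * real (hw n z) / (1 - log 2 \<bar>fourier n g z\<bar>) \<le> real (BQC n f)"
    using k D by (simp add: divide_le_eq mult_ac)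
qed


end
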